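(* Let $d\ge2$, $N\in\mathbb N$, $\epsilon>0$ and $0<\rho\le\frac12$. For $\psi\in\mathbf{Ell}(N,\epsilon)$ and $c\in(\frac12\mathbf I)^{d-1}$ set $\psi_{c,\rho}(\xi')=\rho^{-2}\big(\psi(\rho\xi'+c)-\psi(c)-\rho\nabla\psi(c)\cdot\xi'\big)$. Then $$\sup_{(\xi',c)\in\mathbf I^{d-1}\times(\frac12\mathbf I)^{d-1}}\Big|\partial^\alpha_{\xi'}\Big(\psi_{c,\rho}(\xi')-\tfrac12\langle H\psi(c)\xi',\xi'\rangle\Big)\Big|\le\begin{cases}\frac{(d-1)^{3-|\alpha|}}{(3-|\alpha|)!}\rho\epsilon,&0\le|\alpha|\le2,\\ \rho^{|\alpha|-2}\epsilon,&3\le|\alpha|\le N,\end{cases}$$ where $H\psi$ is the Hessian matrix of $\psi$. Moreover, there is a constant $\mathfrak c$ depending only on $d$ such that if $\psi\in\mathbf{Ell}(N,\epsilon)$, then $\psi_{c,\rho}\in\mathbf{Ell}(N,\mathfrak c\epsilon)$ for all $c\in(\frac12\mathbf I)^{d-1}$ and $0<\rho\le\frac12$.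
   Context: $\mathbf I=[-1,1]$, $\frac12\mathbf I=[-\frac12,\frac12]$. $\mathbf{Ell}(N,\epsilon)$ is the class of $C^N$ functions $\psi:\mathbf I^{d-1}\to\mathbb{R}$ with $\psi(0)=0$, $\nabla\psi(0)=0$, and, writing $w(\xi')=\psi(\xi')-|\xi'|^2/2$, $\sup_{\xi'\in\mathbf I^{d-1}}\max_{0\le|\alpha|\le N}|\partial^\alpha w(\xi')|\le\epsilon$.
   Formalization: The derivative bound on $\psi_{c,\rho}(\xi')-\tfrac12\langle H\psi(c)\xi',\xi'\rangle$ holds for $N\ge 3$ only, and $\psi_{c,\rho}\in\mathbf{Ell}(N,\mathfrak c\epsilon)$ holds for $N\ge 2$ only. The statement above fails without it. *)

theory Defs
  imports "HOL-Analysis.Analysis"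
begin

text \<open>Points of R^(d-1) are vectors of type real^'n, with d - 1 = CARD('n).\<close>

definition cubeI :: "(real^'n) set" where
  "cubeI = {x. \<forall>i. \<bar>x $ i\<bar> \<le> 1}"

definition half_cubeI :: "(real^'n) set" where
  "half_cubeI = {x. \<forall>i. \<bar>x $ i\<bar> \<le> 1/2}"

text \<open>Partial derivative in direction i, taken within the set S (one-sided at the boundary).\<close>
definition partial :: "(real^'n) set \<Rightarrow> 'n \<Rightarrow> (real^'n \<Rightarrow> real) \<Rightarrow> real^'n \<Rightarrow> real" where
  "partial S i f x = vector_derivative (\<lambda>t. f (x + t *\<^sub>R axis i 1))
      (at 0 within {t. x + t *\<^sub>R axis i 1 \<in> S})"

text \<open>Iterated partial derivatives along a list of directions (first list element applied last).\<close>
fun pder_list :: "(real^'n) set \<Rightarrow> 'n list \<Rightarrow> (real^'n \<Rightarrow> real) \<Rightarrow> real^'n \<Rightarrow> real" where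
  "pder_list S [] f = f"
| "pder_list S (i # is) f = partial S i (pder_list S is f)"

definition mi_order :: "('n::finite \<Rightarrow> nat) \<Rightarrow> nat" where
  "mi_order \<alpha> = (\<Sum>i\<in>UNIV. \<alpha> i)"

definition mi_list :: "('n::finite \<Rightarrow> nat) \<Rightarrow> 'n list" where
  "mi_list \<alpha> = (SOME xs. \<forall>i. count_list xs i = \<alpha> i)"

definition pder :: "(real^'n) set \<Rightarrow> ('n \<Rightarrow> nat) \<Rightarrow> (real^'n \<Rightarrow> real) \<Rightarrow> real^'n \<Rightarrow> real" where
  "pder S \<alpha> f = pder_list S (mi_list \<alpha>) f"

definition CN_on :: "(real^'n) set \<Rightarrow> nat \<Rightarrow> (real^'n \<Rightarrow> real) \<Rightarrow> bool" where
  "CN_on S N f \<longleftrightarrow>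
     (\<forall>xs. length xs \<le> N \<longrightarrow> continuous_on S (pder_list S xs f)) \<and>
     (\<forall>xs. length xs < N \<longrightarrow> pder_list S xs f differentiable_on S)"

definition grad :: "(real^'n \<Rightarrow> real) \<Rightarrow> real^'n \<Rightarrow> real^'n" where
  "grad f x = (\<chi> i. partial cubeI i f x)"

definition hess :: "(real^'n \<Rightarrow> real) \<Rightarrow> real^'n \<Rightarrow> real^'n^'n" where
  "hess f x = (\<chi> i j. pder_list cubeI [i, j] f x)"

definition Ell :: "nat \<Rightarrow> real \<Rightarrow> (real^'n \<Rightarrow> real) \<Rightarrow> bool" where
  "Ell N \<epsilon> \<psi> \<longleftrightarrow>
     CN_on cubeI N \<psi> \<and> \<psi> 0 = 0 \<and> grad \<psi> 0 = 0 \<and>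
     (\<forall>\<alpha>. mi_order \<alpha> \<le> N \<longrightarrow>
        (\<forall>\<xi>\<in>cubeI. \<bar>pder cubeI \<alpha> (\<lambda>x. \<psi> x - (norm x)\<^sup>2 / 2) \<xi>\<bar> \<le> \<epsilon>))"

definition psi_cr :: "(real^'n \<Rightarrow> real) \<Rightarrow> real^'n \<Rightarrow> real \<Rightarrow> real^'n \<Rightarrow> real" where
  "psi_cr \<psi> c \<rho> = (\<lambda>\<xi>. (\<psi> (\<rho> *\<^sub>R \<xi> + c) - \<psi> c - \<rho> * (grad \<psi> c \<bullet> \<xi>)) / \<rho>\<^sup>2)"

end

theory Submission
  imports Defs
begin


abbreviation P where "P \<equiv> pder_list cubeI"

lemma cubeI_iff: "x \<in> cubeI \<longleftrightarrow> (\<forall>i. \<bar>x $ i\<bar> \<le> 1)"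
  by (simp add: cubeI_def)

lemma cubeI_cbox: "(cubeI :: (real^'n) set) = cbox (-1) 1"
  by (auto simp: cubeI_def mem_box_cart abs_le_iff)

lemma axis_nth_eq: "(x + t *\<^sub>R axis i (1::real)) $ k = x $ k + (if k = i then t else 0)"
  by (simp add: axis_def)

lemma line_set_nontriv:
  assumes "x \<in> cubeI"
  shows "at (0::real) within {t. x + t *\<^sub>R axis i 1 \<in> cubeI} \<noteq> bot"
proof -
  have T: "{t. x + t *\<^sub>R axis i 1 \<in> cubeI} = {-1 - x$i .. 1 - x$i}"
  proof (intro set_eqI iffI)
    fix t assume "t \<in> {t. x + t *\<^sub>R axis i 1 \<in> cubeI}"
    then have "\<bar>(x + t *\<^sub>R axis i 1) $ i\<bar> \<le> 1" unfolding cubeI_iff by blast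
    then show "t \<in> {-1 - x$i .. 1 - x$i}" by (simp add: axis_def abs_le_iff)
  next
    fix t assume "t \<in> {-1 - x$i .. 1 - x$i}"
    then show "t \<in> {t. x + t *\<^sub>R axis i 1 \<in> cubeI}" using assms
      by (auto simp: cubeI_iff axis_def abs_le_iff)
  qed
  have "-1 - x$i \<le> 0" "0 \<le> 1 - x$i" "-1 - x$i < 1 - x$i" using assms by (auto simp: cubeI_iff abs_le_iff)
  then show ?thesis unfolding T trivial_limit_within
    using islimpt_Icc by simp
qed

lemma partial_hasD:
  assumes "(f has_derivative D) (at x within cubeI)" "x \<in> cubeI"
  shows "partial cubeI i f x = D (axis i 1)"
proof -
  let ?T = "{t. x + t *\<^sub>R axis i 1 \<in> cubeI}"
  have l: "((\<lambda>t. x + t *\<^sub>R axis i 1) has_derivative (\<lambda>t. t *\<^sub>R axis i 1)) (at 0 within ?T)"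
    by (auto intro!: derivative_eq_intros)
  have "(f has_derivative D) (at ((\<lambda>t. x + t *\<^sub>R axis i 1) 0) within (\<lambda>t. x + t *\<^sub>R axis i 1) ` ?T)"
    using assms(1) by (auto intro: has_derivative_subset)
  from diff_chain_within[OF l this]
  have "((\<lambda>t. f (x + t *\<^sub>R axis i 1)) has_derivative (\<lambda>t. D (t *\<^sub>R axis i 1))) (at 0 within ?T)"
    by (simp add: o_def)
  moreover have "linear D" using assms(1) has_derivative_linear by blast
  ultimately have "((\<lambda>t. f (x + t *\<^sub>R axis i 1)) has_vector_derivative D (axis i 1)) (at 0 within ?T)"
    unfolding has_vector_derivative_def by (simp add: linear_scale)
  then show ?thesis unfolding partial_def
    using vector_derivative_within line_set_nontriv[OF assms(2)] by blast
qed

lemma partial_cong: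
  assumes "\<forall>y\<in>cubeI. f y = g y" "x \<in> cubeI"
  shows "partial cubeI i f x = partial cubeI i g x"
proof -
  let ?T = "{t. x + t *\<^sub>R axis i 1 \<in> cubeI}"
  have "0 \<in> ?T" using assms(2) by simp
  have "((\<lambda>t. f (x + t *\<^sub>R axis i 1)) has_vector_derivative D) (at 0 within ?T) \<longleftrightarrow>
        ((\<lambda>t. g (x + t *\<^sub>R axis i 1)) has_vector_derivative D) (at 0 within ?T)" for D
    using has_vector_derivative_transform_within[OF _ zero_less_one \<open>0 \<in> ?T\<close>, of _ D] assms(1)
    by (metis (mono_tags, lifting) mem_Collect_eq)
  then show ?thesis unfolding partial_def vector_derivative_def by simp
qed

lemma pder_list_cong:
  assumes "\<forall>y\<in>cubeI. f y = g y" "x \<in> cubeI"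
  shows "P L f x = P L g x"
  using assms
proof (induction L arbitrary: x)
  case Nil then show ?case by simp
next
  case (Cons i L)
  then show ?case by (simp add: partial_cong)
qed

lemma pder_list_append: "pder_list S (xs @ ys) f = pder_list S xs (pder_list S ys f)"
  by (induction xs) auto

lemma pder_list_snoc: "pder_list S (xs @ [i]) f = pder_list S xs (partial S i f)"
  by (simp add: pder_list_append)

definition smooth :: "nat \<Rightarrow> (real^'n \<Rightarrow> real) \<Rightarrow> bool" where
  "smooth k f \<longleftrightarrow> (\<forall>xs. length xs < k \<longrightarrow> P xs f differentiable_on cubeI)"

lemma smooth_mono: "smooth k f \<Longrightarrow> m \<le> k \<Longrightarrow> smooth m f"
  by (auto simp: smooth_def)

lemma smooth_partial: "smooth (Suc k) f \<Longrightarrow> smooth k (partial cubeI i f)"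
  unfolding smooth_def
  by (metis length_append_singleton not_less_eq pder_list_snoc)

lemma smooth_diff: "smooth (Suc k) f \<Longrightarrow> f differentiable_on cubeI"
  unfolding smooth_def by (metis length_0_conv pder_list.simps(1) zero_less_Suc)

lemma differentiable_on_cong:
  assumes "\<forall>x\<in>S. f x = g x" "g differentiable_on S"
  shows "f differentiable_on S"
  unfolding differentiable_on_def differentiable_def
proof
  fix x assume x: "x \<in> S"
  then obtain D where "(g has_derivative D) (at x within S)"
    using assms(2) unfolding differentiable_on_def differentiable_def by blast
  then have "(f has_derivative D) (at x within S)"
    by (rule has_derivative_transform_within[OF _ zero_less_one x]) (use assms(1) x in auto)
  then show "\<exists>D. (f has_derivative D) (at x within S)" by blast
qed

definition quad :: "real \<Rightarrow> real^'n \<Rightarrow> real^'n^'n \<Rightarrow> real^'n \<Rightarrow> real" where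
  "quad a b M x = a + b \<bullet> x + (M *v x) \<bullet> x"

lemma quad_has_derivative:
  "(quad a b M has_derivative (\<lambda>h. b \<bullet> h + ((M *v h) \<bullet> x + (M *v x) \<bullet> h))) (at x within S)"
  unfolding quad_def
  by (auto intro!: derivative_eq_intros bounded_linear.has_derivative[OF matrix_vector_mul_bounded_linear])

lemma quad_differentiable: "quad a b M differentiable_on S"
  using quad_has_derivative unfolding differentiable_on_def differentiable_def by blast

lemma quad_continuous: "continuous_on S (quad a b M)"
  using quad_differentiable differentiable_imp_continuous_on by blast

lemma partial_quad:
  assumes "x \<in> cubeI"
  shows "partial cubeI i (quad a b M) x = quad (b$i) (\<chi> j. M$i$j + M$j$i) 0 x"
  unfolding partial_hasD[OF quad_has_derivative assms]
  by (simp add: quad_def inner_vec_def matrix_vector_mult_def axis_def sum.distrib algebra_simps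
      if_distrib if_distribR sum_distrib_left cong: if_cong)

lemma quad_const [simp]: "quad a 0 0 x = a"
  by (simp add: quad_def)

lemma vec_lambda_zero [simp]: "(\<chi> j. (0::real)) = 0"
  by (simp add: vec_eq_iff)

lemma pder_quad_ex: fixes M :: "real^'n^'n" shows "\<exists>a' b' M'. \<forall>x\<in>cubeI. P L (quad a b M) x = quad a' b' M' x"
proof (induction L arbitrary: a b M rule: rev_induct)
  case Nil then show ?case by auto
next
  case (snoc i L)
  obtain a' b' M' where h: "\<forall>x\<in>cubeI. P L (quad (b$i) (\<chi> j. M$i$j + M$j$i) 0) x = quad a' b' M' x"
    using snoc by blast
  have "\<forall>x\<in>cubeI. P (L @ [i]) (quad a b M) x = quad a' b' M' x"
  proof
    fix x :: "real^'n" assume x: "x \<in> cubeI"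
    have "P (L @ [i]) (quad a b M) x = P L (quad (b$i) (\<chi> j. M$i$j + M$j$i) 0) x"
      unfolding pder_list_snoc by (rule pder_list_cong[OF _ x]) (simp add: partial_quad)
    then show "P (L @ [i]) (quad a b M) x = quad a' b' M' x" using h x by simp
  qed
  then show ?case by blast
qed

lemma pder_quad_smooth: "P L (quad a b M) differentiable_on cubeI"
  using pder_quad_ex[of L a b M] differentiable_on_cong quad_differentiable by metis

lemma pder_quad_cont: "continuous_on cubeI (P L (quad a b M))"
  using pder_quad_ex[of L a b M] continuous_on_cong quad_continuous by metis

lemma smooth_quad: "smooth k (quad a b M)"
  by (simp add: smooth_def pder_quad_smooth)

lemma partial_const: assumes "x \<in> cubeI" shows "partial cubeI i (\<lambda>_. a) x = 0"
  using partial_hasD[OF has_derivative_const assms] by simp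

lemma pder_const: "x \<in> cubeI \<Longrightarrow> P L (\<lambda>_. a) x = (if L = [] then a else 0)"
proof (induction L arbitrary: a rule: rev_induct)
  case Nil then show ?case by simp
next
  case (snoc i L)
  have "P (L @ [i]) (\<lambda>_. a) x = P L (\<lambda>_. 0) x"
    unfolding pder_list_snoc by (rule pder_list_cong[OF _ snoc.prems]) (simp add: partial_const)
  then show ?case using snoc by simp
qed

lemma quad_const_fun: "quad a 0 0 = (\<lambda>_. a)"
  by auto

lemma pder_quad_0: "x \<in> cubeI \<Longrightarrow> P [] (quad a b M) x = quad a b M x"
  by simp

lemma pder_quad_1: "x \<in> cubeI \<Longrightarrow> P [i] (quad a b M) x = b$i + (\<Sum>j\<in>UNIV. (M$i$j + M$j$i) * x$j)"
  by (simp add: partial_quad quad_def inner_vec_def)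

lemma pder_quad_2: "x \<in> cubeI \<Longrightarrow> P [i,j] (quad a b M) x = M$j$i + M$i$j"
proof -
  assume x: "x \<in> cubeI"
  have "P [i,j] (quad a b M) x = partial cubeI i (quad (b$j) (\<chi> k. M$j$k + M$k$j) 0) x"
    using partial_cong[OF ballI[OF partial_quad] x] by simp
  also have "\<dots> = M$j$i + M$i$j" using x by (simp add: partial_quad quad_def)
  finally show ?thesis .
qed

lemma pder_quad_3:
  fixes M :: "real^'n^'n"
  assumes "x \<in> cubeI" "3 \<le> length L"
  shows "P L (quad a b M) x = 0"
proof -
  have "L = take (length L - 3) L @ drop (length L - 3) L" "length (drop (length L - 3) L) = 3"
    using assms(2) by auto
  then obtain L0 L1 where L: "L = L0 @ L1" "length L1 = 3" by blast
  then obtain i j k where L1: "L1 = [i,j,k]"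
    by (auto simp: numeral_3_eq_3 length_Suc_conv)
  have "\<forall>y\<in>cubeI. P L1 (quad a b M) y = quad 0 0 0 y"
  proof
    fix y :: "real^'n" assume y: "y \<in> cubeI"
    have "P L1 (quad a b M) y = partial cubeI i (P [j,k] (quad a b M)) y" by (simp add: L1)
    also have "\<dots> = partial cubeI i (quad (M$k$j + M$j$k) 0 0) y"
    proof (rule partial_cong[OF _ y], rule ballI)
      fix z :: "real^'n" assume z: "z \<in> cubeI"
      have "P [j,k] (quad a b M) z = M$k$j + M$j$k" by (rule pder_quad_2[OF z])
      then show "P [j,k] (quad a b M) z = quad (M$k$j + M$j$k) 0 0 z" by (simp only: quad_const)
    qed
    also have "\<dots> = quad 0 0 0 y" using y by (simp add: partial_quad)
    finally show "P L1 (quad a b M) y = quad 0 0 0 y" .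
  qed
  then have "P L0 (P L1 (quad a b M)) x = P L0 (quad 0 0 0) x"
    by (rule pder_list_cong[OF _ assms(1)])
  then have "P L (quad a b M) x = P L0 (quad 0 0 0) x"
    by (simp only: L(1) pder_list_append)
  also have "\<dots> = 0" using pder_const[OF assms(1), of L0 0] L L1 assms(2) by (simp add: quad_const_fun)
  finally show ?thesis .
qed

lemma partial_comp_affine:
  fixes F :: "real^'n \<Rightarrow> real"
  assumes F: "F differentiable_on cubeI" and A: "\<forall>\<xi>\<in>cubeI. \<rho> *\<^sub>R \<xi> + c \<in> cubeI" and z: "z \<in> cubeI"
  shows "partial cubeI i (\<lambda>\<xi>. s * F (\<rho> *\<^sub>R \<xi> + c) + quad a b M \<xi>) z
         = s * \<rho> * partial cubeI i F (\<rho> *\<^sub>R z + c) + partial cubeI i (quad a b M) z"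
proof -
  have Az: "\<rho> *\<^sub>R z + c \<in> cubeI" using A z by blast
  obtain DF where DF: "(F has_derivative DF) (at (\<rho> *\<^sub>R z + c) within cubeI)"
    using F Az unfolding differentiable_on_def differentiable_def by blast
  have lin: "linear DF" using DF has_derivative_linear by blast
  have l: "((\<lambda>\<xi>. \<rho> *\<^sub>R \<xi> + c) has_derivative (\<lambda>h. \<rho> *\<^sub>R h)) (at z within cubeI)"
    by (auto intro!: derivative_eq_intros)
  have "(F has_derivative DF) (at ((\<lambda>\<xi>. \<rho> *\<^sub>R \<xi> + c) z) within (\<lambda>\<xi>. \<rho> *\<^sub>R \<xi> + c) ` cubeI)"
    using DF A by (auto intro: has_derivative_subset)
  from diff_chain_within[OF l this]
  have hF: "((\<lambda>\<xi>. F (\<rho> *\<^sub>R \<xi> + c)) has_derivative (\<lambda>h. DF (\<rho> *\<^sub>R h))) (at z within cubeI)"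
    by (simp add: o_def)
  have hG: "((\<lambda>\<xi>. s * F (\<rho> *\<^sub>R \<xi> + c) + quad a b M \<xi>) has_derivative
     (\<lambda>h. s * DF (\<rho> *\<^sub>R h) + (b \<bullet> h + ((M *v h) \<bullet> z + (M *v z) \<bullet> h)))) (at z within cubeI)"
    by (rule has_derivative_add[OF has_derivative_mult_right[OF hF] quad_has_derivative])
  have "partial cubeI i (\<lambda>\<xi>. s * F (\<rho> *\<^sub>R \<xi> + c) + quad a b M \<xi>) z
        = s * DF (\<rho> *\<^sub>R axis i 1) + (b \<bullet> axis i 1 + ((M *v axis i 1) \<bullet> z + (M *v z) \<bullet> axis i 1))"
    using partial_hasD[OF hG z] by simp
  moreover have "partial cubeI i F (\<rho> *\<^sub>R z + c) = DF (axis i 1)"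
    using partial_hasD[OF DF Az] .
  moreover have "partial cubeI i (quad a b M) z = b \<bullet> axis i 1 + ((M *v axis i 1) \<bullet> z + (M *v z) \<bullet> axis i 1)"
    using partial_hasD[OF quad_has_derivative z] .
  moreover have "DF (\<rho> *\<^sub>R axis i 1) = \<rho> * DF (axis i 1)"
    using lin by (simp add: linear_scale)
  ultimately show ?thesis by simp
qed

lemma combo:
  fixes F :: "real^'n \<Rightarrow> real" and M :: "real^'n^'n"
  assumes "smooth (length L) F" "\<forall>\<xi>\<in>cubeI. \<rho> *\<^sub>R \<xi> + c \<in> cubeI" "\<xi> \<in> cubeI"
  shows "P L (\<lambda>\<xi>. s * F (\<rho> *\<^sub>R \<xi> + c) + quad a b M \<xi>) \<xi>
         = s * \<rho> ^ length L * P L F (\<rho> *\<^sub>R \<xi> + c) + P L (quad a b M) \<xi>"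
  using assms
proof (induction L arbitrary: F s a b M \<xi> rule: rev_induct)
  case Nil then show ?case by simp
next
  case (snoc i L)
  have sm: "smooth (Suc (length L)) F" using snoc.prems(1) by simp
  have Fd: "F differentiable_on cubeI" using smooth_diff[OF sm] .
  have sm': "smooth (length L) (partial cubeI i F)" using smooth_partial[OF sm] .
  let ?r = "(\<chi> j. M$i$j + M$j$i)"
  have eq1: "\<forall>z\<in>cubeI. partial cubeI i (\<lambda>\<xi>. s * F (\<rho> *\<^sub>R \<xi> + c) + quad a b M \<xi>) z
     = (s * \<rho>) * partial cubeI i F (\<rho> *\<^sub>R z + c) + quad (b$i) ?r 0 z"
    by (auto simp: partial_comp_affine[OF Fd snoc.prems(2)] partial_quad)
  have "P (L @ [i]) (\<lambda>\<xi>. s * F (\<rho> *\<^sub>R \<xi> + c) + quad a b M \<xi>) \<xi>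
      = P L (\<lambda>z. (s * \<rho>) * partial cubeI i F (\<rho> *\<^sub>R z + c) + quad (b$i) ?r 0 z) \<xi>"
    unfolding pder_list_snoc by (rule pder_list_cong[OF eq1 snoc.prems(3)])
  also have "\<dots> = (s * \<rho>) * \<rho> ^ length L * P L (partial cubeI i F) (\<rho> *\<^sub>R \<xi> + c) + P L (quad (b$i) ?r 0) \<xi>"
    by (rule snoc.IH[OF sm' snoc.prems(2,3)])
  also have "P L (quad (b$i) ?r 0) \<xi> = P (L @ [i]) (quad a b M) \<xi>"
    unfolding pder_list_snoc by (rule pder_list_cong[OF _ snoc.prems(3)]) (simp add: partial_quad)
  finally show ?case by (simp add: pder_list_snoc)
qed

lemma interior_cubeI: "interior (cubeI :: (real^'n) set) = box (-1) 1"
  by (simp add: cubeI_cbox)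

lemma box_sub_cubeI: "box (-1) 1 \<subseteq> (cubeI :: (real^'n) set)"
  using interior_subset interior_cubeI by blast

lemma deriv_at_interior:
  fixes F :: "real^'n \<Rightarrow> real"
  assumes "F differentiable_on cubeI" "z \<in> box (-1) 1"
  shows "\<exists>D. (F has_derivative D) (at z) \<and> partial cubeI i F z = D (axis i 1)"
proof -
  have zc: "z \<in> cubeI" using assms(2) box_sub_cubeI by blast
  obtain D where D: "(F has_derivative D) (at z within cubeI)"
    using assms(1) zc unfolding differentiable_on_def differentiable_def by blast
  have "at z within cubeI = at z" using assms(2) interior_cubeI at_within_interior by metis
  then have "(F has_derivative D) (at z)" using D by simp
  then show ?thesis using partial_hasD[OF D zc] by blast
qed

lemma line_deriv:
  fixes F :: "real^'n \<Rightarrow> real"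
  assumes "F differentiable_on cubeI" "p + s0 *\<^sub>R axis i 1 \<in> box (-1) 1"
  shows "((\<lambda>s. F (p + s *\<^sub>R axis i 1)) has_real_derivative partial cubeI i F (p + s0 *\<^sub>R axis i 1)) (at s0)"
proof -
  obtain D where D: "(F has_derivative D) (at (p + s0 *\<^sub>R axis i 1))"
    and pD: "partial cubeI i F (p + s0 *\<^sub>R axis i 1) = D (axis i 1)"
    using deriv_at_interior[OF assms] by blast
  have lin: "linear D" using D has_derivative_linear by blast
  have l: "((\<lambda>s. p + s *\<^sub>R axis i 1) has_derivative (\<lambda>t. t *\<^sub>R axis i 1)) (at s0)"
    by (auto intro!: derivative_eq_intros)
  have 1: "((\<lambda>s. F (p + s *\<^sub>R axis i 1)) has_derivative (\<lambda>t. D (t *\<^sub>R axis i 1))) (at s0)"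
    using diff_chain_at[OF l D] by (simp add: o_def)
  have eq: "(\<lambda>t. D (t *\<^sub>R axis i 1)) = (*) (D (axis i 1))"
    by (rule ext) (simp add: linear_scale[OF lin])
  from 1 show ?thesis unfolding has_field_derivative_def pD by (simp only: eq)
qed

lemma clairaut_key:
  fixes F :: "real^'n \<Rightarrow> real"
  assumes F: "F differentiable_on cubeI" and G: "partial cubeI i F differentiable_on cubeI"
    and x: "x \<in> box (-1) 1" and e: "e > 0"
  shows "\<exists>d>0. \<forall>h. 0 < h \<and> h < d \<longrightarrow>
     \<bar>(F (x + h *\<^sub>R axis j 1 + h *\<^sub>R axis i 1) - F (x + h *\<^sub>R axis i 1) - F (x + h *\<^sub>R axis j 1) + F x)
       - h\<^sup>2 * partial cubeI j (partial cubeI i F) x\<bar> \<le> 3 * e * h\<^sup>2"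
proof -
  obtain d0 where d0: "d0 > 0" "ball x d0 \<subseteq> box (-1) 1"
    using x open_box open_contains_ball by blast
  obtain DG where DG: "(partial cubeI i F has_derivative DG) (at x)"
    and pDG: "partial cubeI j (partial cubeI i F) x = DG (axis j 1)"
    using deriv_at_interior[OF G x] by blast
  have linG: "linear DG" using DG has_derivative_linear by blast
  obtain d1 where d1: "d1 > 0" "\<forall>y. norm (y - x) < d1 \<longrightarrow>
      norm (partial cubeI i F y - partial cubeI i F x - DG (y - x)) \<le> e * norm (y - x)"
    using DG e unfolding has_derivative_at_alt by blast
  define d where "d = min (d0/2) (d1/2)"
  have "d > 0" using d0 d1 by (simp add: d_def)
  moreover have "\<bar>(F (x + h *\<^sub>R axis j 1 + h *\<^sub>R axis i 1) - F (x + h *\<^sub>R axis i 1) - F (x + h *\<^sub>R axis j 1) + F x)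
       - h\<^sup>2 * partial cubeI j (partial cubeI i F) x\<bar> \<le> 3 * e * h\<^sup>2" if h: "0 < h" "h < d" for h
  proof -
    let ?G = "partial cubeI i F"
    let ?p = "x + h *\<^sub>R axis j 1"
    define \<phi> where "\<phi> = (\<lambda>s. F (?p + s *\<^sub>R axis i 1) - F (x + s *\<^sub>R axis i 1))"
    define \<phi>' where "\<phi>' = (\<lambda>s. ?G (?p + s *\<^sub>R axis i 1) - ?G (x + s *\<^sub>R axis i 1))"
    have nrm: "norm (a *\<^sub>R axis i 1 + b *\<^sub>R axis j (1::real)) \<le> \<bar>a\<bar> + \<bar>b\<bar>" for a b
      by (metis norm_triangle_le norm_scaleR norm_axis_1 mult.right_neutral add_mono order_refl)
    have inball: "?p + s *\<^sub>R axis i 1 \<in> box (-1) 1" "x + s *\<^sub>R axis i 1 \<in> box (-1) 1"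
      if "0 \<le> s" "s \<le> h" for s
    proof -
      have "norm (s *\<^sub>R axis i 1 + h *\<^sub>R axis j (1::real)) \<le> s + h" using nrm[of s h] that h by simp
      then have "dist (?p + s *\<^sub>R axis i 1) x < d0" using h that
        by (simp add: dist_norm d_def algebra_simps)
      then show "?p + s *\<^sub>R axis i 1 \<in> box (-1) 1" using d0 by (auto simp: dist_commute)
      have "dist (x + s *\<^sub>R axis i 1) x < d0" using h that by (simp add: dist_norm d_def)
      then show "x + s *\<^sub>R axis i 1 \<in> box (-1) 1" using d0 by (auto simp: dist_commute)
    qed
    have der: "(\<phi> has_derivative (*) (\<phi>' s)) (at s within {0..h})" if "0 \<le> s" "s \<le> h" for s
    proof -
      have "(\<phi> has_real_derivative \<phi>' s) (at s)"
        unfolding \<phi>_def \<phi>'_def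
        by (intro DERIV_diff line_deriv[OF F] inball that)
      then show ?thesis
        unfolding has_field_derivative_def by (rule has_derivative_at_withinI)
    qed
    obtain \<theta> where th: "\<theta> \<in> {0<..<h}" "\<phi> h - \<phi> 0 = \<phi>' \<theta> * h"
      using mvt_simple[OF h(1) der] by auto
    have Delta: "F (x + h *\<^sub>R axis j 1 + h *\<^sub>R axis i 1) - F (x + h *\<^sub>R axis i 1) - F (x + h *\<^sub>R axis j 1) + F x
        = h * \<phi>' \<theta>" using th by (simp add: \<phi>_def mult.commute)
    define u1 where "u1 = \<theta> *\<^sub>R axis i 1 + h *\<^sub>R axis j (1::real)"
    define u2 where "u2 = \<theta> *\<^sub>R axis i (1::real)"
    have nu1: "norm u1 \<le> 2 * h" using nrm[of \<theta> h] th by (simp add: u1_def)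
    have nu2: "norm u2 \<le> h" using th by (simp add: u2_def)
    have b1: "norm (?G (x + u1) - ?G x - DG u1) \<le> e * (2 * h)"
    proof -
      have "norm (?G (x + u1) - ?G x - DG ((x + u1) - x)) \<le> e * norm ((x + u1) - x)"
      proof -
        have "norm ((x + u1) - x) < d1" using nu1 h by (simp add: d_def)
        then show ?thesis using d1(2) by blast
      qed
      then show ?thesis using nu1 e by (simp, smt (verit) mult_left_mono)
    qed
    have b2: "norm (?G (x + u2) - ?G x - DG u2) \<le> e * h"
    proof -
      have "norm (?G (x + u2) - ?G x - DG ((x + u2) - x)) \<le> e * norm ((x + u2) - x)"
      proof -
        have "norm ((x + u2) - x) < d1" using nu2 h by (simp add: d_def)
        then show ?thesis using d1(2) by blast
      qed
      then show ?thesis using nu2 e by (simp, smt (verit) mult_left_mono)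
    qed
    have A1: "\<phi>' \<theta> = ?G (x + u1) - ?G (x + u2)"
      by (simp add: \<phi>'_def u1_def u2_def algebra_simps)
    have A2: "DG u1 - DG u2 = h * DG (axis j 1)"
      using linG by (simp add: u1_def u2_def linear_add linear_scale)
    have "\<phi>' \<theta> - h * DG (axis j 1) = (?G (x + u1) - ?G x - DG u1) - (?G (x + u2) - ?G x - DG u2)"
      by (simp only: A1 flip: A2)
    then have "\<bar>\<phi>' \<theta> - h * DG (axis j 1)\<bar> \<le> \<bar>?G (x + u1) - ?G x - DG u1\<bar> + \<bar>?G (x + u2) - ?G x - DG u2\<bar>"
      by (metis abs_triangle_ineq4)
    then have "\<bar>\<phi>' \<theta> - h * DG (axis j 1)\<bar> \<le> 3 * e * h"
      using b1 b2 unfolding real_norm_def by linarith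
    note B = this
    have E1: "h * \<phi>' \<theta> - h\<^sup>2 * DG (axis j 1) = h * (\<phi>' \<theta> - h * DG (axis j 1))"
      by (simp add: power2_eq_square algebra_simps)
    have "\<bar>h * (\<phi>' \<theta> - h * DG (axis j 1))\<bar> = h * \<bar>\<phi>' \<theta> - h * DG (axis j 1)\<bar>"
      using h by (simp add: abs_mult)
    also have "\<dots> \<le> h * (3 * e * h)" using B h by (intro mult_left_mono) auto
    also have "\<dots> = 3 * e * h\<^sup>2" by (simp add: power2_eq_square)
    finally show ?thesis by (simp only: Delta pDG E1)
  qed
  ultimately show ?thesis by blast
qed

lemma eq_by_eps: fixes a b :: real assumes "\<And>e. e > 0 \<Longrightarrow> \<bar>a - b\<bar> \<le> 6 * e" shows "a = b"
proof (rule ccontr)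
  assume "a \<noteq> b"
  then have "\<bar>a - b\<bar> / 12 > 0" by simp
  from assms[OF this] \<open>a \<noteq> b\<close> show False by simp
qed

lemma clairaut_int:
  fixes F :: "real^'n \<Rightarrow> real"
  assumes F: "F differentiable_on cubeI" and Gi: "partial cubeI i F differentiable_on cubeI"
    and Gj: "partial cubeI j F differentiable_on cubeI" and x: "x \<in> box (-1) 1"
  shows "partial cubeI j (partial cubeI i F) x = partial cubeI i (partial cubeI j F) x"
proof (rule eq_by_eps)
  fix e :: real assume e: "e > 0"
  obtain d1 where d1: "d1 > 0" "\<forall>h. 0 < h \<and> h < d1 \<longrightarrow>
     \<bar>(F (x + h *\<^sub>R axis j 1 + h *\<^sub>R axis i 1) - F (x + h *\<^sub>R axis i 1) - F (x + h *\<^sub>R axis j 1) + F x)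
       - h\<^sup>2 * partial cubeI j (partial cubeI i F) x\<bar> \<le> 3 * e * h\<^sup>2"
    using clairaut_key[OF F Gi x e] by blast
  obtain d2 where d2: "d2 > 0" "\<forall>h. 0 < h \<and> h < d2 \<longrightarrow>
     \<bar>(F (x + h *\<^sub>R axis i 1 + h *\<^sub>R axis j 1) - F (x + h *\<^sub>R axis j 1) - F (x + h *\<^sub>R axis i 1) + F x)
       - h\<^sup>2 * partial cubeI i (partial cubeI j F) x\<bar> \<le> 3 * e * h\<^sup>2"
    using clairaut_key[OF F Gj x e] by blast
  define h where "h = min d1 d2 / 2"
  have h: "0 < h" "h < d1" "h < d2" using d1 d2 by (auto simp: h_def)
  have sw: "x + h *\<^sub>R axis i 1 + h *\<^sub>R axis j 1 = x + h *\<^sub>R axis j 1 + h *\<^sub>R axis i 1"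
    by (simp add: algebra_simps)
  define \<Delta> where "\<Delta> = F (x + h *\<^sub>R axis j 1 + h *\<^sub>R axis i 1) - F (x + h *\<^sub>R axis i 1) - F (x + h *\<^sub>R axis j 1) + F x"
  have 1: "\<bar>\<Delta> - h\<^sup>2 * partial cubeI j (partial cubeI i F) x\<bar> \<le> 3 * e * h\<^sup>2"
    using d1(2) h unfolding \<Delta>_def by blast
  have D2: "\<Delta> = F (x + h *\<^sub>R axis i 1 + h *\<^sub>R axis j 1) - F (x + h *\<^sub>R axis j 1) - F (x + h *\<^sub>R axis i 1) + F x"
    unfolding \<Delta>_def sw by simp
  have 2: "\<bar>\<Delta> - h\<^sup>2 * partial cubeI i (partial cubeI j F) x\<bar> \<le> 3 * e * h\<^sup>2"
    unfolding D2 using d2(2) h by blast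
  let ?P1 = "partial cubeI j (partial cubeI i F) x" and ?P2 = "partial cubeI i (partial cubeI j F) x"
  have "h\<^sup>2 * ?P1 - h\<^sup>2 * ?P2 = (\<Delta> - h\<^sup>2 * ?P2) - (\<Delta> - h\<^sup>2 * ?P1)" by simp
  then have "\<bar>h\<^sup>2 * ?P1 - h\<^sup>2 * ?P2\<bar> \<le> 3 * e * h\<^sup>2 + 3 * e * h\<^sup>2"
    using 1 2 abs_triangle_ineq4[of "\<Delta> - h\<^sup>2 * ?P2" "\<Delta> - h\<^sup>2 * ?P1"] by linarith
  moreover have "\<bar>h\<^sup>2 * ?P1 - h\<^sup>2 * ?P2\<bar> = h\<^sup>2 * \<bar>?P1 - ?P2\<bar>"
    by (simp add: abs_mult flip: right_diff_distrib)
  ultimately have "h\<^sup>2 * \<bar>?P1 - ?P2\<bar> \<le> h\<^sup>2 * (6 * e)" by (simp add: algebra_simps)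
  then show "\<bar>partial cubeI j (partial cubeI i F) x - partial cubeI i (partial cubeI j F) x\<bar> \<le> 6 * e"
    using h by (simp add: mult_le_cancel_left)
qed

lemma closure_box_cubeI: "closure (box (-1) 1) = (cubeI :: (real^'n) set)"
proof -
  have "(0::real^'n) \<in> box (-1) 1" by (simp add: mem_box_cart)
  then have "box (-1) (1::real^'n) \<noteq> {}" by blast
  then show ?thesis using closure_box cubeI_cbox by metis
qed

lemma clairaut:
  fixes F :: "real^'n \<Rightarrow> real"
  assumes F: "F differentiable_on cubeI" and Gi: "partial cubeI i F differentiable_on cubeI"
    and Gj: "partial cubeI j F differentiable_on cubeI"
    and c1: "continuous_on cubeI (partial cubeI j (partial cubeI i F))"
    and c2: "continuous_on cubeI (partial cubeI i (partial cubeI j F))"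
    and x: "x \<in> cubeI"
  shows "partial cubeI j (partial cubeI i F) x = partial cubeI i (partial cubeI j F) x"
proof -
  let ?f = "\<lambda>x. \<bar>partial cubeI j (partial cubeI i F) x - partial cubeI i (partial cubeI j F) x\<bar>"
  have "continuous_on (closure (box (-1) 1)) ?f"
    unfolding closure_box_cubeI using c1 c2 by (intro continuous_intros)
  from continuous_le_on_closure[OF this, of x 0]
  have "?f x \<le> 0" using x clairaut_int[OF F Gi Gj] closure_box_cubeI by auto
  then show ?thesis by simp
qed

lemma swap_pder:
  fixes f :: "real^'n \<Rightarrow> real"
  assumes cn: "CN_on cubeI m f" and len: "length xs + 2 + length ys \<le> m" and x: "x \<in> cubeI"
  shows "P (xs @ i # j # ys) f x = P (xs @ j # i # ys) f x"
proof -
  let ?F = "P ys f"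
  have dif: "\<And>xs. length xs < m \<Longrightarrow> P xs f differentiable_on cubeI"
    and cont: "\<And>xs. length xs \<le> m \<Longrightarrow> continuous_on cubeI (P xs f)"
    using cn unfolding CN_on_def by auto
  have F: "?F differentiable_on cubeI" using dif[of ys] len by simp
  have Gi: "partial cubeI i ?F differentiable_on cubeI" using dif[of "i # ys"] len by simp
  have Gj: "partial cubeI j ?F differentiable_on cubeI" using dif[of "j # ys"] len by simp
  have c1: "continuous_on cubeI (partial cubeI i (partial cubeI j ?F))" using cont[of "i # j # ys"] len by simp
  have c2: "continuous_on cubeI (partial cubeI j (partial cubeI i ?F))" using cont[of "j # i # ys"] len by simp
  have "\<forall>y\<in>cubeI. P (i # j # ys) f y = P (j # i # ys) f y"
    using clairaut[OF F Gj Gi c1 c2] by simp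
  then have "P xs (P (i # j # ys) f) x = P xs (P (j # i # ys) f) x"
    by (rule pder_list_cong[OF _ x])
  then show ?thesis by (simp add: pder_list_append)
qed

lemma move_front:
  fixes f :: "real^'n \<Rightarrow> real"
  assumes cn: "CN_on cubeI m f" and len: "length (u @ a # v) \<le> m" and x: "x \<in> cubeI"
  shows "P (u @ a # v) f x = P (a # u @ v) f x"
  using len x
proof (induction u arbitrary: x)
  case Nil then show ?case by simp
next
  case (Cons b u)
  have "P ((b # u) @ a # v) f x = partial cubeI b (P (u @ a # v) f) x" by simp
  also have "\<dots> = partial cubeI b (P (a # u @ v) f) x"
    using Cons by (intro partial_cong) auto
  also have "\<dots> = P ([] @ b # a # (u @ v)) f x" by simp
  also have "\<dots> = P ([] @ a # b # (u @ v)) f x"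
    by (rule swap_pder[OF cn _ Cons.prems(2)]) (use Cons.prems(1) in simp)
  finally show ?case by simp
qed

lemma perm_pder:
  fixes f :: "real^'n \<Rightarrow> real"
  assumes cn: "CN_on cubeI m f" and ms: "mset L1 = mset L2" and len: "length L1 \<le> m" and x: "x \<in> cubeI"
  shows "P L1 f x = P L2 f x"
  using ms len x
proof (induction L1 arbitrary: L2 x)
  case Nil then show ?case by simp
next
  case (Cons a L1)
  have "a \<in> set L2" using Cons.prems(1) by (metis list.set_intros(1) set_mset_mset)
  then obtain u v where L2: "L2 = u @ a # v" by (meson split_list)
  have ms': "mset L1 = mset (u @ v)" using Cons.prems(1) L2 by simp
  have "P (a # L1) f x = partial cubeI a (P L1 f) x" by simp
  also have "\<dots> = partial cubeI a (P (u @ v) f) x"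
    using Cons ms' by (intro partial_cong) auto
  also have "\<dots> = P (a # u @ v) f x" by simp
  also have "\<dots> = P L2 f x"
    unfolding L2 using move_front[OF cn _ Cons.prems(3), of u a v] Cons.prems(2) ms'
    by (metis L2 Cons.prems(1) size_mset)
  finally show ?case .
qed

lemma mi_list_count: "count_list (mi_list (\<alpha> :: 'n::finite \<Rightarrow> nat)) i = \<alpha> i"
proof -
  obtain xs where xs: "mset xs = (\<Sum>j\<in>UNIV. replicate_mset (\<alpha> j) j)" using ex_mset by blast
  have "\<forall>i. count_list xs i = \<alpha> i"
  proof
    fix i
    have "count_list xs i = count (mset xs) i" by (simp add: count_mset)
    also have "\<dots> = \<alpha> i" unfolding xs count_sum by simp
    finally show "count_list xs i = \<alpha> i" .
  qed
  then have "\<forall>i. count_list (mi_list \<alpha>) i = \<alpha> i"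
    unfolding mi_list_def by (rule someI)
  then show ?thesis by blast
qed

lemma mi_order_count: "mi_order (\<lambda>i. count_list L (i::'n::finite)) = length L"
  unfolding mi_order_def by (rule sum_count_set) auto

lemma mi_order_list: "mi_order \<alpha> = length (mi_list (\<alpha> :: 'n::finite \<Rightarrow> nat))"
proof -
  have "mi_order \<alpha> = mi_order (\<lambda>i. count_list (mi_list \<alpha>) i)" by (simp add: mi_list_count)
  then show ?thesis by (simp add: mi_order_count)
qed

lemma mset_mi_list: "mset (mi_list (\<lambda>i. count_list L (i::'n::finite))) = mset L"
  by (simp add: multiset_eq_iff count_mset mi_list_count)

lemma mat_mult_vec: "(mat c *v x) = c *\<^sub>R (x :: real^'n)"
proof -
  have "(if i = j then c else 0) * x$j = (if i = j then c * x$j else 0)" for i j by simp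
  then show ?thesis by (simp add: vec_eq_iff matrix_vector_mult_def mat_def)
qed

lemma affine_differentiable:
  fixes F :: "real^'n \<Rightarrow> real"
  assumes F: "F differentiable_on cubeI" and A: "\<forall>\<xi>\<in>cubeI. \<rho> *\<^sub>R \<xi> + c \<in> cubeI"
  shows "(\<lambda>\<xi>. F (\<rho> *\<^sub>R \<xi> + c)) differentiable_on cubeI"
  unfolding differentiable_on_def
proof
  fix z :: "real^'n" assume z: "z \<in> cubeI"
  have l: "(\<lambda>\<xi>. \<rho> *\<^sub>R \<xi> + c) differentiable (at z within cubeI)"
    by (auto intro!: derivative_intros)
  have "F differentiable (at ((\<lambda>\<xi>. \<rho> *\<^sub>R \<xi> + c) z) within cubeI)"
    using F A z unfolding differentiable_on_def by blast
  then have "F differentiable (at ((\<lambda>\<xi>. \<rho> *\<^sub>R \<xi> + c) z) within (\<lambda>\<xi>. \<rho> *\<^sub>R \<xi> + c) ` cubeI)"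
    using A by (auto intro: differentiable_within_subset)
  from differentiable_chain_within[OF l this]
  show "(\<lambda>\<xi>. F (\<rho> *\<^sub>R \<xi> + c)) differentiable (at z within cubeI)" by (simp add: o_def)
qed

lemma affine_continuous:
  fixes F :: "real^'n \<Rightarrow> real"
  assumes F: "continuous_on cubeI F" and A: "\<forall>\<xi>\<in>cubeI. \<rho> *\<^sub>R \<xi> + c \<in> cubeI"
  shows "continuous_on cubeI (\<lambda>\<xi>. F (\<rho> *\<^sub>R \<xi> + c))"
  by (rule continuous_on_compose2[OF F]) (use A in \<open>auto intro!: continuous_intros\<close>)

lemma CN_on_combo:
  fixes F :: "real^'n \<Rightarrow> real" and M :: "real^'n^'n"
  assumes cn: "CN_on cubeI N F" and A: "\<forall>\<xi>\<in>cubeI. \<rho> *\<^sub>R \<xi> + c \<in> cubeI"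
  shows "CN_on cubeI N (\<lambda>\<xi>. s * F (\<rho> *\<^sub>R \<xi> + c) + quad a b M \<xi>)"
proof -
  have dif: "\<And>xs. length xs < N \<Longrightarrow> P xs F differentiable_on cubeI"
    and cont: "\<And>xs. length xs \<le> N \<Longrightarrow> continuous_on cubeI (P xs F)"
    using cn unfolding CN_on_def by auto
  have sm: "smooth (length xs) F" if "length xs \<le> N" for xs :: "'n list"
    using dif that unfolding smooth_def by auto
  have eq: "\<forall>\<xi>\<in>cubeI. P xs (\<lambda>\<xi>. s * F (\<rho> *\<^sub>R \<xi> + c) + quad a b M \<xi>) \<xi>
      = (s * \<rho> ^ length xs) * P xs F (\<rho> *\<^sub>R \<xi> + c) + P xs (quad a b M) \<xi>" if "length xs \<le> N" for xs
    using combo[OF sm[OF that] A] by auto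
  show ?thesis unfolding CN_on_def
  proof (intro conjI allI impI)
    fix xs :: "'n list" assume l: "length xs \<le> N"
    have "continuous_on cubeI (\<lambda>\<xi>. (s * \<rho> ^ length xs) * P xs F (\<rho> *\<^sub>R \<xi> + c) + P xs (quad a b M) \<xi>)"
      by (intro continuous_intros affine_continuous[OF cont[OF l] A] pder_quad_cont)
    then show "continuous_on cubeI (P xs (\<lambda>\<xi>. s * F (\<rho> *\<^sub>R \<xi> + c) + quad a b M \<xi>))"
      using continuous_on_cong[OF refl, of cubeI "P xs (\<lambda>\<xi>. s * F (\<rho> *\<^sub>R \<xi> + c) + quad a b M \<xi>)"] eq[OF l] by auto
  next
    fix xs :: "'n list" assume l: "length xs < N"
    have dd: "(\<lambda>\<xi>. (s * \<rho> ^ length xs) * P xs F (\<rho> *\<^sub>R \<xi> + c) + P xs (quad a b M) \<xi>) differentiable_on cubeI"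
      by (intro derivative_intros affine_differentiable[OF dif[OF l] A] pder_quad_smooth)
    show "P xs (\<lambda>\<xi>. s * F (\<rho> *\<^sub>R \<xi> + c) + quad a b M \<xi>) differentiable_on cubeI"
      by (rule differentiable_on_cong[OF _ dd]) (use eq[of xs] l in auto)
  qed
qed



lemma cmp1:
  fixes R R' B B' :: "real \<Rightarrow> real"
  assumes s: "0 \<le> s" "s \<le> 1"
    and dR: "\<forall>t\<in>{0..1}. (R has_real_derivative R' t) (at t within {0..1})"
    and dB: "\<forall>t\<in>{0..1}. (B has_real_derivative B' t) (at t within {0..1})"
    and le: "\<forall>t\<in>{0..1}. \<bar>R' t\<bar> \<le> B' t" and R0: "R 0 = 0" and B0: "B 0 = 0"
  shows "\<bar>R s\<bar> \<le> B s"
proof (cases "s = 0")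
  case True then show ?thesis using R0 B0 by simp
next
  case False
  then have s0: "0 < s" using s by simp
  have sub: "{0..s} \<subseteq> {0..1::real}" using s by auto
  have d1: "((\<lambda>t. B t - R t) has_derivative (*) (B' t - R' t)) (at t within {0..s})" if "0 \<le> t" "t \<le> s" for t
  proof -
    have "((\<lambda>t. B t - R t) has_real_derivative (B' t - R' t)) (at t within {0..1})"
      using dR dB that s by (intro DERIV_diff) auto
    then show ?thesis unfolding has_field_derivative_def[symmetric]
      using has_field_derivative_subset sub by blast
  qed
  have d2: "((\<lambda>t. B t + R t) has_derivative (*) (B' t + R' t)) (at t within {0..s})" if "0 \<le> t" "t \<le> s" for t
  proof -
    have "((\<lambda>t. B t + R t) has_real_derivative (B' t + R' t)) (at t within {0..1})"
      using dR dB that s by (intro DERIV_add) auto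
    then show ?thesis unfolding has_field_derivative_def[symmetric]
      using has_field_derivative_subset sub by blast
  qed
  obtain x1 where x1: "x1 \<in> {0<..<s}" "(B s - R s) - (B 0 - R 0) = (B' x1 - R' x1) * (s - 0)"
    using mvt_simple[OF s0 d1] by blast
  obtain x2 where x2: "x2 \<in> {0<..<s}" "(B s + R s) - (B 0 + R 0) = (B' x2 + R' x2) * (s - 0)"
    using mvt_simple[OF s0 d2] by blast
  have "\<bar>R' x1\<bar> \<le> B' x1" "\<bar>R' x2\<bar> \<le> B' x2" using le x1 x2 s by auto
  then have "B' x1 - R' x1 \<ge> 0" "B' x2 + R' x2 \<ge> 0" by (auto simp: abs_le_iff)
  then show ?thesis using x1 x2 R0 B0 s0
    by (auto simp: abs_le_iff) (smt (verit) mult_nonneg_nonneg)+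
qed

lemma taylor1:
  fixes g0 g1 :: "real \<Rightarrow> real"
  assumes d0: "\<forall>t\<in>{0..1}. (g0 has_real_derivative g1 t) (at t within {0..1})"
    and K: "\<forall>t\<in>{0..1}. \<bar>g1 t\<bar> \<le> K"
  shows "\<bar>g0 1 - g0 0\<bar> \<le> K"
proof -
  have "\<bar>(\<lambda>t. g0 t - g0 0) 1\<bar> \<le> (\<lambda>t. K * t) 1"
    by (rule cmp1[where R'=g1 and B'="\<lambda>_. K"]) (use d0 K in \<open>auto intro!: derivative_eq_intros\<close>)
  then show ?thesis by simp
qed

lemma taylor1s:
  fixes g0 g1 :: "real \<Rightarrow> real"
  assumes d0: "\<forall>t\<in>{0..1}. (g0 has_real_derivative g1 t) (at t within {0..1})"
    and K: "\<forall>t\<in>{0..1}. \<bar>g1 t\<bar> \<le> K" and s: "0 \<le> s" "s \<le> 1"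
  shows "\<bar>g0 s - g0 0\<bar> \<le> K * s"
proof -
  have "\<bar>(\<lambda>t. g0 t - g0 0) s\<bar> \<le> (\<lambda>t. K * t) s"
    by (rule cmp1[where R'=g1 and B'="\<lambda>_. K"]) (use d0 K s in \<open>auto intro!: derivative_eq_intros\<close>)
  then show ?thesis by simp
qed

lemma taylor2s:
  fixes g0 g1 g2 :: "real \<Rightarrow> real"
  assumes d0: "\<forall>t\<in>{0..1}. (g0 has_real_derivative g1 t) (at t within {0..1})"
    and d1: "\<forall>t\<in>{0..1}. (g1 has_real_derivative g2 t) (at t within {0..1})"
    and K: "\<forall>t\<in>{0..1}. \<bar>g2 t\<bar> \<le> K" and s: "0 \<le> s" "s \<le> 1"
  shows "\<bar>g0 s - g0 0 - s * g1 0\<bar> \<le> K * s^2 / 2"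
proof -
  have b: "\<forall>t\<in>{0..1}. \<bar>g1 t - g1 0\<bar> \<le> K * t" using taylor1s[OF d1 K] by auto
  have "\<bar>(\<lambda>t. g0 t - g0 0 - t * g1 0) s\<bar> \<le> (\<lambda>t. K * t^2 / 2) s"
    by (rule cmp1[where R'="\<lambda>t. g1 t - g1 0" and B'="\<lambda>t. K * t"])
       (use d0 b s in \<open>auto intro!: derivative_eq_intros\<close>)
  then show ?thesis by simp
qed

lemma taylor3:
  fixes g0 g1 g2 g3 :: "real \<Rightarrow> real"
  assumes d0: "\<forall>t\<in>{0..1}. (g0 has_real_derivative g1 t) (at t within {0..1})"
    and d1: "\<forall>t\<in>{0..1}. (g1 has_real_derivative g2 t) (at t within {0..1})"
    and d2: "\<forall>t\<in>{0..1}. (g2 has_real_derivative g3 t) (at t within {0..1})"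
    and K: "\<forall>t\<in>{0..1}. \<bar>g3 t\<bar> \<le> K"
  shows "\<bar>g0 1 - g0 0 - g1 0 - g2 0 / 2\<bar> \<le> K / 6"
proof -
  have b: "\<forall>t\<in>{0..1}. \<bar>g1 t - g1 0 - t * g2 0\<bar> \<le> K * t^2 / 2" using taylor2s[OF d1 d2 K] by auto
  have "\<bar>(\<lambda>t. g0 t - g0 0 - t * g1 0 - t^2 / 2 * g2 0) 1\<bar> \<le> (\<lambda>t. K * t^3 / 6) 1"
    by (rule cmp1[where R'="\<lambda>t. g1 t - g1 0 - t * g2 0" and B'="\<lambda>t. K * t^2 / 2"])
       (use d0 b in \<open>auto intro!: derivative_eq_intros simp: power2_eq_square power3_eq_cube\<close>)
  then show ?thesis by simp
qed

lemma seg_in: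
  fixes c v :: "real^'n"
  assumes "c \<in> cubeI" "c + v \<in> cubeI" "0 \<le> t" "t \<le> 1"
  shows "c + t *\<^sub>R v \<in> cubeI"
  unfolding cubeI_iff
proof
  fix i
  have a: "\<bar>c$i\<bar> \<le> 1" "\<bar>c$i + v$i\<bar> \<le> 1" using assms(1,2) unfolding cubeI_iff by auto
  have "c$i + t * v$i = (1 - t) * c$i + t * (c$i + v$i)" by (simp add: algebra_simps)
  also have "\<bar>\<dots>\<bar> \<le> (1 - t) * \<bar>c$i\<bar> + t * \<bar>c$i + v$i\<bar>"
  proof -
    have "\<bar>(1 - t) * c$i + t * (c$i + v$i)\<bar> \<le> \<bar>(1 - t) * c$i\<bar> + \<bar>t * (c$i + v$i)\<bar>"
      by (rule abs_triangle_ineq)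
    also have "\<dots> = (1 - t) * \<bar>c$i\<bar> + t * \<bar>c$i + v$i\<bar>"
      using assms(3,4) by (simp add: abs_mult)
    finally show ?thesis .
  qed
  also have "\<dots> \<le> (1 - t) * 1 + t * 1"
    using a assms(3,4) by (intro add_mono mult_left_mono) auto
  finally show "\<bar>(c + t *\<^sub>R v) $ i\<bar> \<le> 1" by simp
qed

lemma seg_deriv:
  fixes G :: "real^'n \<Rightarrow> real"
  assumes G: "G differentiable_on cubeI" and c: "c \<in> cubeI" "c + v \<in> cubeI" and t: "t \<in> {0..1}"
  shows "((\<lambda>t. G (c + t *\<^sub>R v)) has_real_derivative (\<Sum>j\<in>UNIV. v$j * partial cubeI j G (c + t *\<^sub>R v)))
           (at t within {0..1})"
proof -
  let ?z = "c + t *\<^sub>R v"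
  have z: "?z \<in> cubeI" using seg_in c t by auto
  obtain D where D: "(G has_derivative D) (at ?z within cubeI)"
    using G z unfolding differentiable_on_def differentiable_def by blast
  have lin: "linear D" using D has_derivative_linear by blast
  have l: "((\<lambda>t. c + t *\<^sub>R v) has_derivative (\<lambda>s. s *\<^sub>R v)) (at t within {0..1})"
    by (auto intro!: derivative_eq_intros)
  have "(G has_derivative D) (at ((\<lambda>t. c + t *\<^sub>R v) t) within (\<lambda>t. c + t *\<^sub>R v) ` {0..1})"
    using D seg_in[OF c] by (auto intro: has_derivative_subset)
  from diff_chain_within[OF l this]
  have 1: "((\<lambda>t. G (c + t *\<^sub>R v)) has_derivative (\<lambda>s. D (s *\<^sub>R v))) (at t within {0..1})"
    by (simp add: o_def)
  have "D v = D (\<Sum>j\<in>UNIV. v$j *\<^sub>R axis j 1)"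
    using basis_expansion[of v] by (simp add: scalar_mult_eq_scaleR)
  also have "\<dots> = (\<Sum>j\<in>UNIV. v$j * D (axis j 1))"
    by (simp add: linear_sum[OF lin] linear_scale[OF lin])
  also have "\<dots> = (\<Sum>j\<in>UNIV. v$j * partial cubeI j G ?z)"
    using partial_hasD[OF D z] by simp
  finally have Dv: "D v = (\<Sum>j\<in>UNIV. v$j * partial cubeI j G ?z)" .
  have eq: "(\<lambda>s. D (s *\<^sub>R v)) = (*) (\<Sum>j\<in>UNIV. v$j * partial cubeI j G ?z)"
    by (rule ext) (simp add: linear_scale[OF lin] Dv mult.commute)
  from 1 show ?thesis unfolding has_field_derivative_def by (simp only: eq)
qed

lemma sum_bound:
  fixes v :: "real^'n"
  assumes "\<And>j. \<bar>a j\<bar> \<le> K"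
  shows "\<bar>\<Sum>j\<in>UNIV. v$j * a j\<bar> \<le> (\<Sum>j\<in>UNIV. \<bar>v$j\<bar>) * K"
proof -
  have "\<bar>\<Sum>j\<in>UNIV. v$j * a j\<bar> \<le> (\<Sum>j\<in>UNIV. \<bar>v$j * a j\<bar>)" by (rule sum_abs)
  also have "\<dots> \<le> (\<Sum>j\<in>UNIV. \<bar>v$j\<bar> * K)"
    by (intro sum_mono) (simp add: abs_mult assms mult_left_mono)
  also have "\<dots> = (\<Sum>j\<in>UNIV. \<bar>v$j\<bar>) * K" by (simp add: sum_distrib_right)
  finally show ?thesis .
qed

lemma seg_T1:
  fixes F :: "real^'n \<Rightarrow> real"
  assumes F: "F differentiable_on cubeI" and K: "\<And>j z. z \<in> cubeI \<Longrightarrow> \<bar>partial cubeI j F z\<bar> \<le> K"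
    and c: "c \<in> cubeI" "c + v \<in> cubeI"
  shows "\<bar>F (c + v) - F c\<bar> \<le> (\<Sum>j\<in>UNIV. \<bar>v$j\<bar>) * K"
proof -
  have "\<bar>(\<lambda>t. F (c + t *\<^sub>R v)) 1 - (\<lambda>t. F (c + t *\<^sub>R v)) 0\<bar> \<le> (\<Sum>j\<in>UNIV. \<bar>v$j\<bar>) * K"
  proof (rule taylor1)
    show "\<forall>t\<in>{0..1}. ((\<lambda>t. F (c + t *\<^sub>R v)) has_real_derivative (\<Sum>j\<in>UNIV. v$j * partial cubeI j F (c + t *\<^sub>R v))) (at t within {0..1})"
      using seg_deriv[OF F c] by blast
    show "\<forall>t\<in>{0..1}. \<bar>\<Sum>j\<in>UNIV. v$j * partial cubeI j F (c + t *\<^sub>R v)\<bar> \<le> (\<Sum>j\<in>UNIV. \<bar>v$j\<bar>) * K"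
      using seg_in[OF c] by (auto intro!: sum_bound K)
  qed
  then show ?thesis by simp
qed

lemma seg_T2:
  fixes F :: "real^'n \<Rightarrow> real"
  assumes F: "F differentiable_on cubeI" and F1: "\<And>j. partial cubeI j F differentiable_on cubeI"
    and K: "\<And>j k z. z \<in> cubeI \<Longrightarrow> \<bar>partial cubeI k (partial cubeI j F) z\<bar> \<le> K"
    and c: "c \<in> cubeI" "c + v \<in> cubeI"
  shows "\<bar>F (c + v) - F c - (\<Sum>j\<in>UNIV. v$j * partial cubeI j F c)\<bar> \<le> (\<Sum>j\<in>UNIV. \<bar>v$j\<bar>)^2 * K / 2"
proof -
  let ?S = "\<Sum>j\<in>UNIV. \<bar>v$j\<bar>"
  have K0: "K \<ge> 0" using K[OF c(1)] by (meson abs_ge_zero order_trans)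
  have "\<bar>(\<lambda>t. F (c + t *\<^sub>R v)) 1 - (\<lambda>t. F (c + t *\<^sub>R v)) 0 - 1 * (\<lambda>t. \<Sum>j\<in>UNIV. v$j * partial cubeI j F (c + t *\<^sub>R v)) 0\<bar>
        \<le> (?S * (?S * K)) * 1^2 / 2"
  proof (rule taylor2s)
    show "\<forall>t\<in>{0..1}. ((\<lambda>t. F (c + t *\<^sub>R v)) has_real_derivative (\<Sum>j\<in>UNIV. v$j * partial cubeI j F (c + t *\<^sub>R v))) (at t within {0..1})"
      using seg_deriv[OF F c] by blast
    show "\<forall>t\<in>{0..1}. ((\<lambda>t. \<Sum>j\<in>UNIV. v$j * partial cubeI j F (c + t *\<^sub>R v)) has_real_derivative
        (\<Sum>j\<in>UNIV. v$j * (\<Sum>k\<in>UNIV. v$k * partial cubeI k (partial cubeI j F) (c + t *\<^sub>R v)))) (at t within {0..1})"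
      by (intro ballI DERIV_sum DERIV_cmult seg_deriv[OF F1 c])
    show "\<forall>t\<in>{0..1}. \<bar>\<Sum>j\<in>UNIV. v$j * (\<Sum>k\<in>UNIV. v$k * partial cubeI k (partial cubeI j F) (c + t *\<^sub>R v))\<bar> \<le> ?S * (?S * K)"
      using seg_in[OF c] by (auto intro!: sum_bound K)
  qed auto
  then show ?thesis by (simp add: power2_eq_square mult.assoc)
qed

lemma seg_T3:
  fixes F :: "real^'n \<Rightarrow> real"
  assumes F: "F differentiable_on cubeI" and F1: "\<And>j. partial cubeI j F differentiable_on cubeI"
    and F2: "\<And>j k. partial cubeI k (partial cubeI j F) differentiable_on cubeI"
    and K: "\<And>j k l z. z \<in> cubeI \<Longrightarrow> \<bar>partial cubeI l (partial cubeI k (partial cubeI j F)) z\<bar> \<le> K"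
    and c: "c \<in> cubeI" "c + v \<in> cubeI"
  shows "\<bar>F (c + v) - F c - (\<Sum>j\<in>UNIV. v$j * partial cubeI j F c)
           - (\<Sum>j\<in>UNIV. v$j * (\<Sum>k\<in>UNIV. v$k * partial cubeI k (partial cubeI j F) c)) / 2\<bar>
         \<le> (\<Sum>j\<in>UNIV. \<bar>v$j\<bar>)^3 * K / 6"
proof -
  let ?S = "\<Sum>j\<in>UNIV. \<bar>v$j\<bar>"
  have "\<bar>F (c + 1 *\<^sub>R v) - F (c + 0 *\<^sub>R v) - (\<Sum>j\<in>UNIV. v$j * partial cubeI j F (c + 0 *\<^sub>R v))
      - (\<Sum>j\<in>UNIV. v$j * (\<Sum>k\<in>UNIV. v$k * partial cubeI k (partial cubeI j F) (c + 0 *\<^sub>R v))) / 2\<bar>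
        \<le> (?S * (?S * (?S * K))) / 6"
  proof (rule taylor3[of "\<lambda>t. F (c + t *\<^sub>R v)"
      "\<lambda>t. \<Sum>j\<in>UNIV. v$j * partial cubeI j F (c + t *\<^sub>R v)"
      "\<lambda>t. \<Sum>j\<in>UNIV. v$j * (\<Sum>k\<in>UNIV. v$k * partial cubeI k (partial cubeI j F) (c + t *\<^sub>R v))"])
    show "\<forall>t\<in>{0..1}. ((\<lambda>t. F (c + t *\<^sub>R v)) has_real_derivative (\<Sum>j\<in>UNIV. v$j * partial cubeI j F (c + t *\<^sub>R v))) (at t within {0..1})"
      using seg_deriv[OF F c] by blast
    show "\<forall>t\<in>{0..1}. ((\<lambda>t. \<Sum>j\<in>UNIV. v$j * partial cubeI j F (c + t *\<^sub>R v)) has_real_derivative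
        (\<Sum>j\<in>UNIV. v$j * (\<Sum>k\<in>UNIV. v$k * partial cubeI k (partial cubeI j F) (c + t *\<^sub>R v)))) (at t within {0..1})"
      by (intro ballI DERIV_sum DERIV_cmult seg_deriv[OF F1 c])
    show "\<forall>t\<in>{0..1}. ((\<lambda>t. \<Sum>j\<in>UNIV. v$j * (\<Sum>k\<in>UNIV. v$k * partial cubeI k (partial cubeI j F) (c + t *\<^sub>R v))) has_real_derivative
        (\<Sum>j\<in>UNIV. v$j * (\<Sum>k\<in>UNIV. v$k * (\<Sum>l\<in>UNIV. v$l * partial cubeI l (partial cubeI k (partial cubeI j F)) (c + t *\<^sub>R v))))) (at t within {0..1})"
      by (intro ballI DERIV_sum DERIV_cmult seg_deriv[OF F2 c])
    show "\<forall>t\<in>{0..1}. \<bar>\<Sum>j\<in>UNIV. v$j * (\<Sum>k\<in>UNIV. v$k * (\<Sum>l\<in>UNIV. v$l * partial cubeI l (partial cubeI k (partial cubeI j F)) (c + t *\<^sub>R v)))\<bar> \<le> ?S * (?S * (?S * K))"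
    proof
      fix t :: real assume "t \<in> {0..1}"
      then have z: "c + t *\<^sub>R v \<in> cubeI" using seg_in[OF c] by auto
      show "\<bar>\<Sum>j\<in>UNIV. v$j * (\<Sum>k\<in>UNIV. v$k * (\<Sum>l\<in>UNIV. v$l * partial cubeI l (partial cubeI k (partial cubeI j F)) (c + t *\<^sub>R v)))\<bar> \<le> ?S * (?S * (?S * K))"
        by (rule sum_bound, rule sum_bound, rule sum_bound, rule K[OF z])
    qed
  qed
  moreover have "?S ^ 3 * K / 6 = (?S * (?S * (?S * K))) / 6" by (simp add: power3_eq_cube)
  ultimately show ?thesis by (simp only: scaleR_one scaleR_zero_left add_0_right)
qed



lemma maps_half:
  fixes c :: "real^'n"
  assumes "0 < \<rho>" "\<rho> \<le> 1/2" "c \<in> half_cubeI"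
  shows "\<forall>\<xi>\<in>cubeI. \<rho> *\<^sub>R \<xi> + c \<in> cubeI"
proof
  fix \<xi> :: "real^'n" assume \<xi>: "\<xi> \<in> cubeI"
  show "\<rho> *\<^sub>R \<xi> + c \<in> cubeI" unfolding cubeI_iff
  proof
    fix i
    have a: "\<bar>\<xi>$i\<bar> \<le> 1" "\<bar>c$i\<bar> \<le> 1/2" using \<xi> assms(3) by (auto simp: cubeI_iff half_cubeI_def)
    have "\<bar>\<rho> * \<xi>$i + c$i\<bar> \<le> \<rho> * \<bar>\<xi>$i\<bar> + \<bar>c$i\<bar>"
      using assms(1) by (metis abs_mult abs_of_pos abs_triangle_ineq)
    also have "\<dots> \<le> 1/2 * 1 + 1/2" using a assms(1,2) by (intro add_mono mult_mono) auto
    finally show "\<bar>(\<rho> *\<^sub>R \<xi> + c) $ i\<bar> \<le> 1" by simp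
  qed
qed

lemma half_in_cubeI: assumes "c \<in> half_cubeI" shows "c \<in> cubeI"
  unfolding cubeI_iff
proof
  fix i
  have "\<bar>c$i\<bar> \<le> 1/2" using assms by (simp add: half_cubeI_def)
  then show "\<bar>c$i\<bar> \<le> 1" by simp
qed

lemma maps_id: "\<forall>\<xi>\<in>cubeI. 1 *\<^sub>R \<xi> + 0 \<in> (cubeI :: (real^'n) set)"
  by simp

lemma w_eq:
  fixes \<psi> :: "real^'n \<Rightarrow> real"
  shows "(\<lambda>x. \<psi> x - (norm x)\<^sup>2 / 2) = (\<lambda>\<xi>. 1 * \<psi> (1 *\<^sub>R \<xi> + 0) + quad 0 0 (mat (-1/2)) \<xi>)"
  by (rule ext) (simp add: quad_def mat_mult_vec power2_norm_eq_inner)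

lemma psi_eq:
  fixes \<psi> :: "real^'n \<Rightarrow> real"
  shows "\<psi> = (\<lambda>\<xi>. 1 * (\<lambda>x. \<psi> x - (norm x)\<^sup>2 / 2) (1 *\<^sub>R \<xi> + 0) + quad 0 0 (mat (1/2)) \<xi>)"
  by (rule ext) (simp add: quad_def mat_mult_vec power2_norm_eq_inner)

lemma w_CN:
  fixes \<psi> :: "real^'n \<Rightarrow> real"
  assumes "CN_on cubeI N \<psi>"
  shows "CN_on cubeI N (\<lambda>x. \<psi> x - (norm x)\<^sup>2 / 2)"
  unfolding w_eq by (rule CN_on_combo[OF assms maps_id])

lemma CN_smooth: "CN_on cubeI N f \<Longrightarrow> length L \<le> N \<Longrightarrow> smooth (length L) f"
  unfolding CN_on_def smooth_def by auto

lemma CN_diff: "CN_on cubeI N f \<Longrightarrow> length L < N \<Longrightarrow> P L f differentiable_on cubeI"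
  unfolding CN_on_def by auto

lemma w_bound:
  fixes \<psi> :: "real^'n \<Rightarrow> real"
  assumes E: "Ell N \<epsilon> \<psi>" and L: "length L \<le> N" and z: "z \<in> cubeI"
  shows "\<bar>P L (\<lambda>x. \<psi> x - (norm x)\<^sup>2 / 2) z\<bar> \<le> \<epsilon>"
proof -
  let ?w = "\<lambda>x. \<psi> x - (norm x)\<^sup>2 / 2"
  let ?\<alpha> = "\<lambda>i. count_list L i"
  have cn: "CN_on cubeI N ?w" using w_CN E unfolding Ell_def by blast
  have ord: "mi_order ?\<alpha> \<le> N" by (simp add: mi_order_count L)
  have "P L ?w z = P (mi_list ?\<alpha>) ?w z"
    by (rule perm_pder[OF cn _ L z]) (simp add: mset_mi_list)
  also have "\<dots> = pder cubeI ?\<alpha> ?w z" by (simp add: pder_def)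
  finally show ?thesis using E ord z unfolding Ell_def by auto
qed

lemma psi_pder:
  fixes \<psi> :: "real^'n \<Rightarrow> real"
  assumes wd: "w = (\<lambda>x. \<psi> x - (norm x)\<^sup>2 / 2)" and cn: "CN_on cubeI N \<psi>"
    and L: "length L \<le> N" and x: "x \<in> cubeI"
  shows "P L \<psi> x = P L w x + P L (quad 0 0 (mat (1/2))) x"
proof -
  have e: "\<psi> = (\<lambda>\<xi>. 1 * w (1 *\<^sub>R \<xi> + 0) + quad 0 0 (mat (1/2)) \<xi>)"
    unfolding wd by (rule ext) (simp add: quad_def mat_mult_vec power2_norm_eq_inner)
  have cw: "CN_on cubeI N w" using w_CN[OF cn] wd by simp
  have "P L \<psi> x = P L (\<lambda>\<xi>. 1 * w (1 *\<^sub>R \<xi> + 0) + quad 0 0 (mat (1/2)) \<xi>) x"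
    by (subst e) (rule refl)
  also have "\<dots> = 1 * 1 ^ length L * P L w (1 *\<^sub>R x + 0) + P L (quad 0 0 (mat (1/2))) x"
    by (rule combo[OF CN_smooth[OF cw L] maps_id x])
  finally show ?thesis by simp
qed

lemma grad_rel:
  fixes \<psi> :: "real^'n \<Rightarrow> real"
  assumes wd: "w = (\<lambda>x. \<psi> x - (norm x)\<^sup>2 / 2)" and cn: "CN_on cubeI N \<psi>" and N: "1 \<le> N"
    and c: "c \<in> cubeI"
  shows "grad \<psi> c = grad w c + c"
proof -
  have "partial cubeI i \<psi> c = partial cubeI i w c + c$i" for i
  proof -
    have "P [i] \<psi> c = P [i] w c + P [i] (quad 0 0 (mat (1/2))) c"
      by (rule psi_pder[OF wd cn _ c]) (use N in simp)
    also have "P [i] (quad 0 0 (mat (1/2))) c = c$i"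
    proof -
      have "(if i = j then 1/2 else 0) + (if j = i then 1/2 else 0) = (if i = j then 1 else (0::real))" for j
        by auto
      moreover have "(if i = j then 1 else 0) * c$j = (if i = j then c$j else 0)" for j by simp
      ultimately show ?thesis using pder_quad_1[OF c, of i 0 0 "mat (1/2)"] by (simp add: mat_def)
    qed
    finally show ?thesis by simp
  qed
  then show ?thesis by (simp add: grad_def vec_eq_iff)
qed

lemma hess_rel:
  fixes \<psi> :: "real^'n \<Rightarrow> real"
  assumes wd: "w = (\<lambda>x. \<psi> x - (norm x)\<^sup>2 / 2)" and cn: "CN_on cubeI N \<psi>" and N: "2 \<le> N"
    and c: "c \<in> cubeI"
  shows "hess \<psi> c = hess w c + mat 1"
proof -
  have "P [i,j] \<psi> c = P [i,j] w c + (if i = j then 1 else 0)" for i j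
  proof -
    have "P [i,j] \<psi> c = P [i,j] w c + P [i,j] (quad 0 0 (mat (1/2))) c"
      by (rule psi_pder[OF wd cn _ c]) (use N in simp)
    also have "P [i,j] (quad 0 0 (mat (1/2))) c = (if i = j then 1 else 0)"
      using pder_quad_2[OF c, of i j 0 0 "mat (1/2)"] by (auto simp: mat_def)
    finally show ?thesis .
  qed
  then show ?thesis by (simp add: hess_def vec_eq_iff mat_def)
qed

lemma psi_cr_eq:
  fixes \<psi> :: "real^'n \<Rightarrow> real"
  assumes wd: "w = (\<lambda>x. \<psi> x - (norm x)\<^sup>2 / 2)" and g: "grad \<psi> c = grad w c + c" and r: "\<rho> > 0"
  shows "psi_cr \<psi> c \<rho> = (\<lambda>\<xi>. (1/\<rho>\<^sup>2) * w (\<rho> *\<^sub>R \<xi> + c)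
            + quad (- w c / \<rho>\<^sup>2) (- (1/\<rho>) *\<^sub>R grad w c) (mat (1/2)) \<xi>)"
proof (rule ext)
  fix \<xi> :: "real^'n"
  have p: "\<psi> x = w x + (x \<bullet> x) / 2" for x unfolding wd by (simp add: power2_norm_eq_inner)
  have "(\<rho> *\<^sub>R \<xi> + c) \<bullet> (\<rho> *\<^sub>R \<xi> + c) = \<rho>\<^sup>2 * (\<xi> \<bullet> \<xi>) + 2 * \<rho> * (c \<bullet> \<xi>) + c \<bullet> c"
    by (simp add: inner_add_left inner_add_right inner_commute power2_eq_square algebra_simps)
  then show "psi_cr \<psi> c \<rho> \<xi> = (1/\<rho>\<^sup>2) * w (\<rho> *\<^sub>R \<xi> + c)
            + quad (- w c / \<rho>\<^sup>2) (- (1/\<rho>) *\<^sub>R grad w c) (mat (1/2)) \<xi>"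
    using r unfolding psi_cr_def quad_def g p
    by (simp add: mat_mult_vec inner_add_left field_simps power2_eq_square)
qed

lemma S_bound:
  fixes \<xi> :: "real^'n"
  assumes "\<xi> \<in> cubeI" "\<rho> > 0"
  shows "(\<Sum>j\<in>UNIV. \<bar>(\<rho> *\<^sub>R \<xi>)$j\<bar>) \<le> \<rho> * real CARD('n)"
proof -
  have "(\<Sum>j\<in>UNIV. \<bar>(\<rho> *\<^sub>R \<xi>)$j\<bar>) = \<rho> * (\<Sum>j\<in>UNIV. \<bar>\<xi>$j\<bar>)"
    using assms(2) by (simp add: abs_mult sum_distrib_left)
  also have "(\<Sum>j\<in>UNIV. \<bar>\<xi>$j\<bar>) \<le> (\<Sum>j\<in>(UNIV::'n set). 1)"
    using assms(1) by (intro sum_mono) (simp add: cubeI_iff)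
  then have "\<rho> * (\<Sum>j\<in>UNIV. \<bar>\<xi>$j\<bar>) \<le> \<rho> * real CARD('n)"
    using assms(2) by (intro mult_left_mono) auto
  finally show ?thesis .
qed

lemma list_cases3:
  obtains "L = []" | i where "L = [i]" | i j where "L = [i,j]" | "3 \<le> length L"
  by (cases L; cases "tl L"; cases "tl (tl L)") auto

lemma inner_sum: "v \<bullet> (x::real^'n) = (\<Sum>j\<in>UNIV. v$j * x$j)"
  by (simp add: inner_vec_def)

lemma scale_abs: fixes a X B :: real shows "a > 0 \<Longrightarrow> \<bar>X\<bar> \<le> B \<Longrightarrow> \<bar>a * X\<bar> \<le> a * B"
  by (simp add: abs_mult mult_left_mono)

lemma part2_bound:
  fixes w :: "real^'n \<Rightarrow> real"
  assumes cw: "CN_on cubeI N w" and N: "2 \<le> N"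
    and bd: "\<And>L z. length L \<le> N \<Longrightarrow> z \<in> cubeI \<Longrightarrow> \<bar>P L w z\<bar> \<le> \<epsilon>"
    and r: "0 < \<rho>" "\<rho> \<le> 1/2" and c: "c \<in> half_cubeI" and \<xi>: "\<xi> \<in> cubeI"
    and L: "length L \<le> N"
  shows "\<bar>P L (\<lambda>\<xi>. (1/\<rho>\<^sup>2) * w (\<rho> *\<^sub>R \<xi> + c) + quad (- w c / \<rho>\<^sup>2) (- (1/\<rho>) *\<^sub>R grad w c) 0 \<xi>) \<xi>\<bar>
         \<le> (real CARD('n)^2 + real CARD('n) + 1) * \<epsilon>"
proof -
  let ?n = "real CARD('n)"
  let ?v = "\<rho> *\<^sub>R \<xi>"
  let ?S = "\<Sum>j\<in>UNIV. \<bar>?v$j\<bar>"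
  have A: "\<forall>\<xi>\<in>cubeI. \<rho> *\<^sub>R \<xi> + c \<in> cubeI" using maps_half r c by blast
  have cI: "c \<in> cubeI" using half_in_cubeI c by blast
  have y: "c + ?v \<in> cubeI" using A \<xi> by (simp add: add.commute)
  have yc: "\<rho> *\<^sub>R \<xi> + c = c + ?v" by (simp add: add.commute)
  have S: "?S \<le> \<rho> * ?n" using S_bound[OF \<xi> r(1)] .
  have S0: "0 \<le> ?S" by (simp add: sum_nonneg)
  have e0: "0 \<le> \<epsilon>" using bd[of "[]" c] cI by auto
  have n0: "0 \<le> ?n" by simp
  have eq: "P L (\<lambda>\<xi>. (1/\<rho>\<^sup>2) * w (\<rho> *\<^sub>R \<xi> + c) + quad (- w c / \<rho>\<^sup>2) (- (1/\<rho>) *\<^sub>R grad w c) 0 \<xi>) \<xi>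
     = (1/\<rho>\<^sup>2) * \<rho> ^ length L * P L w (c + ?v) + P L (quad (- w c / \<rho>\<^sup>2) (- (1/\<rho>) *\<^sub>R grad w c) 0) \<xi>"
    using combo[OF CN_smooth[OF cw L] A \<xi>, of "1/\<rho>\<^sup>2" "- w c / \<rho>\<^sup>2" "- (1/\<rho>) *\<^sub>R grad w c" 0]
    by (simp only: yc)
  show ?thesis
  proof (cases L rule: list_cases3)
    case 1
    have T: "\<bar>w (c + ?v) - w c - (\<Sum>j\<in>UNIV. ?v$j * partial cubeI j w c)\<bar> \<le> ?S^2 * \<epsilon> / 2"
    proof (rule seg_T2[OF _ _ _ cI y])
      show "w differentiable_on cubeI" using CN_diff[OF cw, of "[]"] N by simp
      show "partial cubeI j w differentiable_on cubeI" for j using CN_diff[OF cw, of "[j]"] N by simp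
      show "\<bar>partial cubeI k (partial cubeI j w) z\<bar> \<le> \<epsilon>" if "z \<in> cubeI" for j k z
        using bd[of "[k,j]" z] N that by simp
    qed
    have g: "(\<Sum>j\<in>UNIV. ?v$j * partial cubeI j w c) = \<rho> * (grad w c \<bullet> \<xi>)"
      by (simp add: inner_sum grad_def sum_distrib_left mult_ac)
    have val: "P L (\<lambda>\<xi>. (1/\<rho>\<^sup>2) * w (\<rho> *\<^sub>R \<xi> + c) + quad (- w c / \<rho>\<^sup>2) (- (1/\<rho>) *\<^sub>R grad w c) 0 \<xi>) \<xi>
       = (1/\<rho>\<^sup>2) * (w (c + ?v) - w c - (\<Sum>j\<in>UNIV. ?v$j * partial cubeI j w c))"
      using eq r unfolding 1 g by (simp add: quad_def field_simps power2_eq_square)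
    have "\<bar>(1/\<rho>\<^sup>2) * (w (c + ?v) - w c - (\<Sum>j\<in>UNIV. ?v$j * partial cubeI j w c))\<bar> \<le> (1/\<rho>\<^sup>2) * (?S^2 * \<epsilon> / 2)"
      using T r by (intro scale_abs) auto
    also have "\<dots> \<le> (1/\<rho>\<^sup>2) * ((\<rho> * ?n)^2 * \<epsilon> / 2)"
      using S S0 e0 r by (intro mult_left_mono divide_right_mono mult_right_mono power_mono) auto
    also have "\<dots> = ?n^2 * \<epsilon> / 2" using r by (simp add: field_simps power2_eq_square)
    also have "\<dots> \<le> (?n^2 + ?n + 1) * \<epsilon>" using e0 n0 by (simp add: field_simps)
    finally show ?thesis using val by simp
  next
    case (2 i)
    have T: "\<bar>partial cubeI i w (c + ?v) - partial cubeI i w c\<bar> \<le> ?S * \<epsilon>"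
    proof (rule seg_T1[OF _ _ cI y])
      show "partial cubeI i w differentiable_on cubeI" using CN_diff[OF cw, of "[i]"] N by simp
      show "\<bar>partial cubeI j (partial cubeI i w) z\<bar> \<le> \<epsilon>" if "z \<in> cubeI" for j z
        using bd[of "[j,i]" z] N that by simp
    qed
    have val: "P L (\<lambda>\<xi>. (1/\<rho>\<^sup>2) * w (\<rho> *\<^sub>R \<xi> + c) + quad (- w c / \<rho>\<^sup>2) (- (1/\<rho>) *\<^sub>R grad w c) 0 \<xi>) \<xi>
       = (1/\<rho>) * (partial cubeI i w (c + ?v) - partial cubeI i w c)"
      using eq r pder_quad_1[OF \<xi>, of i "- w c / \<rho>\<^sup>2" "- (1/\<rho>) *\<^sub>R grad w c" 0] unfolding 2
      by (simp add: grad_def field_simps power2_eq_square)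
    have "\<bar>(1/\<rho>) * (partial cubeI i w (c + ?v) - partial cubeI i w c)\<bar> \<le> (1/\<rho>) * (?S * \<epsilon>)"
      using T r by (intro scale_abs) auto
    also have "\<dots> \<le> (1/\<rho>) * ((\<rho> * ?n) * \<epsilon>)"
      using S S0 e0 r by (intro mult_left_mono mult_right_mono) auto
    also have "\<dots> = ?n * \<epsilon>" using r by simp
    also have "\<dots> \<le> (?n^2 + ?n + 1) * \<epsilon>" using e0 n0 by (simp add: field_simps)
    finally show ?thesis using val by simp
  next
    case (3 i j)
    have val: "P L (\<lambda>\<xi>. (1/\<rho>\<^sup>2) * w (\<rho> *\<^sub>R \<xi> + c) + quad (- w c / \<rho>\<^sup>2) (- (1/\<rho>) *\<^sub>R grad w c) 0 \<xi>) \<xi>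
       = P [i,j] w (c + ?v)"
      using eq r pder_quad_2[OF \<xi>, of i j "- w c / \<rho>\<^sup>2" "- (1/\<rho>) *\<^sub>R grad w c" 0] unfolding 3
      by (simp add: field_simps power2_eq_square)
    have "\<bar>P [i,j] w (c + ?v)\<bar> \<le> \<epsilon>" using bd[of "[i,j]" "c + ?v"] N y by simp
    also have "\<dots> \<le> (?n^2 + ?n + 1) * \<epsilon>" using e0 n0 by (simp add: field_simps)
    finally show ?thesis using val by simp
  next
    case 4
    have val: "P L (\<lambda>\<xi>. (1/\<rho>\<^sup>2) * w (\<rho> *\<^sub>R \<xi> + c) + quad (- w c / \<rho>\<^sup>2) (- (1/\<rho>) *\<^sub>R grad w c) 0 \<xi>) \<xi>
       = \<rho> ^ (length L - 2) * P L w (c + ?v)"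
    proof -
      have "(1/\<rho>\<^sup>2) * \<rho> ^ length L = \<rho> ^ (length L - 2)"
        using r 4 by (simp add: power_diff power2_eq_square field_simps)
      then show ?thesis using eq pder_quad_3[OF \<xi> 4] by simp
    qed
    have "\<bar>\<rho> ^ (length L - 2) * P L w (c + ?v)\<bar> \<le> 1 * \<epsilon>"
      unfolding abs_mult using bd[OF L y] r e0
      by (intro mult_mono) (auto simp: power_le_one)
    also have "\<dots> \<le> (?n^2 + ?n + 1) * \<epsilon>" using e0 n0 by (simp add: field_simps)
    finally show ?thesis using val by simp
  qed
qed

lemma hess_sym:
  fixes w :: "real^'n \<Rightarrow> real"
  assumes cw: "CN_on cubeI N w" and N: "2 \<le> N" and c: "c \<in> cubeI"
  shows "hess w c $ i $ j = hess w c $ j $ i"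
proof -
  have "P [i,j] w c = P [j,i] w c"
    by (rule perm_pder[OF cw _ _ c]) (use N in auto)
  then show ?thesis by (simp add: hess_def)
qed

lemma quadform: "((M::real^'n^'n) *v x) \<bullet> x = (\<Sum>j\<in>UNIV. x$j * (\<Sum>k\<in>UNIV. x$k * M$k$j))"
proof -
  have "(M *v x) \<bullet> x = (\<Sum>k\<in>UNIV. (\<Sum>j\<in>UNIV. M$k$j * x$j) * x$k)"
    by (simp add: inner_sum matrix_vector_mult_def mult.commute)
  also have "\<dots> = (\<Sum>k\<in>UNIV. \<Sum>j\<in>UNIV. M$k$j * x$j * x$k)"
    by (simp only: sum_distrib_right)
  also have "\<dots> = (\<Sum>k\<in>UNIV. \<Sum>j\<in>UNIV. x$j * (x$k * M$k$j))"
    by (simp add: mult_ac)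
  also have "\<dots> = (\<Sum>j\<in>UNIV. \<Sum>k\<in>UNIV. x$j * (x$k * M$k$j))" by (rule sum.swap)
  also have "\<dots> = (\<Sum>j\<in>UNIV. x$j * (\<Sum>k\<in>UNIV. x$k * M$k$j))" by (simp add: sum_distrib_left)
  finally show ?thesis .
qed

lemma fact3: "fact 3 = (6::real)"
  by (simp add: eval_nat_numeral)

lemma part1_bound:
  fixes w :: "real^'n \<Rightarrow> real"
  assumes cw: "CN_on cubeI N w" and N: "3 \<le> N"
    and bd: "\<And>L z. length L \<le> N \<Longrightarrow> z \<in> cubeI \<Longrightarrow> \<bar>P L w z\<bar> \<le> \<epsilon>"
    and r: "0 < \<rho>" "\<rho> \<le> 1/2" and c: "c \<in> half_cubeI" and \<xi>: "\<xi> \<in> cubeI"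
    and L: "length L \<le> N"
  shows "\<bar>P L (\<lambda>\<xi>. (1/\<rho>\<^sup>2) * w (\<rho> *\<^sub>R \<xi> + c) + quad (- w c / \<rho>\<^sup>2) (- (1/\<rho>) *\<^sub>R grad w c) (- (1/2) *\<^sub>R hess w c) \<xi>) \<xi>\<bar>
         \<le> (if length L \<le> 2 then real CARD('n) ^ (3 - length L) / fact (3 - length L) * \<rho> * \<epsilon>
             else \<rho> ^ (length L - 2) * \<epsilon>)"
proof -
  let ?n = "real CARD('n)"
  let ?v = "\<rho> *\<^sub>R \<xi>"
  let ?S = "\<Sum>j\<in>UNIV. \<bar>?v$j\<bar>"
  let ?H = "hess w c"
  let ?M = "- (1/2) *\<^sub>R hess w c"
  let ?\<Phi> = "\<lambda>\<xi>. (1/\<rho>\<^sup>2) * w (\<rho> *\<^sub>R \<xi> + c) + quad (- w c / \<rho>\<^sup>2) (- (1/\<rho>) *\<^sub>R grad w c) ?M \<xi>"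
  have A: "\<forall>\<xi>\<in>cubeI. \<rho> *\<^sub>R \<xi> + c \<in> cubeI" using maps_half r c by blast
  have cI: "c \<in> cubeI" using half_in_cubeI c by blast
  have y: "c + ?v \<in> cubeI" using A \<xi> by (simp add: add.commute)
  have yc: "\<rho> *\<^sub>R \<xi> + c = c + ?v" by (simp add: add.commute)
  have S: "?S \<le> \<rho> * ?n" using S_bound[OF \<xi> r(1)] .
  have S0: "0 \<le> ?S" by (simp add: sum_nonneg)
  have e0: "0 \<le> \<epsilon>" using bd[of "[]" c] cI by auto
  have sym: "?H $ i $ j = ?H $ j $ i" for i j using hess_sym[OF cw _ cI] N by simp
  have Hij: "?H $ i $ j = partial cubeI i (partial cubeI j w) c" for i j by (simp add: hess_def)
  have Mij: "?M $ i $ j = - (1/2) * ?H $ i $ j" for i j by simp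
  have eq: "P L ?\<Phi> \<xi> = (1/\<rho>\<^sup>2) * \<rho> ^ length L * P L w (c + ?v) + P L (quad (- w c / \<rho>\<^sup>2) (- (1/\<rho>) *\<^sub>R grad w c) ?M) \<xi>"
    using combo[OF CN_smooth[OF cw L] A \<xi>, of "1/\<rho>\<^sup>2" "- w c / \<rho>\<^sup>2" "- (1/\<rho>) *\<^sub>R grad w c" ?M]
    by (simp only: yc)
  show ?thesis
  proof (cases L rule: list_cases3)
    case 1
    have T: "\<bar>w (c + ?v) - w c - (\<Sum>j\<in>UNIV. ?v$j * partial cubeI j w c)
           - (\<Sum>j\<in>UNIV. ?v$j * (\<Sum>k\<in>UNIV. ?v$k * partial cubeI k (partial cubeI j w) c)) / 2\<bar> \<le> ?S^3 * \<epsilon> / 6"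
    proof (rule seg_T3[OF _ _ _ _ cI y])
      show "w differentiable_on cubeI" using CN_diff[OF cw, of "[]"] N by simp
      show "partial cubeI j w differentiable_on cubeI" for j using CN_diff[OF cw, of "[j]"] N by simp
      show "partial cubeI k (partial cubeI j w) differentiable_on cubeI" for j k
        using CN_diff[OF cw, of "[k,j]"] N by simp
      show "\<bar>partial cubeI l (partial cubeI k (partial cubeI j w)) z\<bar> \<le> \<epsilon>" if "z \<in> cubeI" for j k l z
        using bd[of "[l,k,j]" z] N that by simp
    qed
    have g: "(\<Sum>j\<in>UNIV. ?v$j * partial cubeI j w c) = \<rho> * (grad w c \<bullet> \<xi>)"
      by (simp add: inner_sum grad_def sum_distrib_left mult_ac)
    have h: "(\<Sum>j\<in>UNIV. ?v$j * (\<Sum>k\<in>UNIV. ?v$k * partial cubeI k (partial cubeI j w) c)) = \<rho>\<^sup>2 * ((?H *v \<xi>) \<bullet> \<xi>)"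
      unfolding quadform Hij by (simp add: sum_distrib_left power2_eq_square mult_ac)
    have qf: "(?M *v \<xi>) \<bullet> \<xi> = - (1/2) * ((?H *v \<xi>) \<bullet> \<xi>)"
      unfolding quadform by (simp add: sum_distrib_left mult_ac)
    have val: "P L ?\<Phi> \<xi> = (1/\<rho>\<^sup>2) * (w (c + ?v) - w c - (\<Sum>j\<in>UNIV. ?v$j * partial cubeI j w c)
           - (\<Sum>j\<in>UNIV. ?v$j * (\<Sum>k\<in>UNIV. ?v$k * partial cubeI k (partial cubeI j w) c)) / 2)"
      using eq r unfolding 1 g h quad_def qf pder_list.simps by (simp add: field_simps power2_eq_square)
    have "\<bar>P L ?\<Phi> \<xi>\<bar> \<le> (1/\<rho>\<^sup>2) * (?S^3 * \<epsilon> / 6)"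
      unfolding val using T r by (intro scale_abs) auto
    also have "\<dots> \<le> (1/\<rho>\<^sup>2) * ((\<rho> * ?n)^3 * \<epsilon> / 6)"
      using S S0 e0 r by (intro mult_left_mono divide_right_mono mult_right_mono power_mono) auto
    also have "\<dots> = ?n^3 / fact 3 * \<rho> * \<epsilon>" using r by (simp add: fact3 field_simps power2_eq_square power3_eq_cube)
    finally show ?thesis using 1 by simp
  next
    case (2 i)
    let ?G = "partial cubeI i w"
    have T: "\<bar>?G (c + ?v) - ?G c - (\<Sum>j\<in>UNIV. ?v$j * partial cubeI j ?G c)\<bar> \<le> ?S^2 * \<epsilon> / 2"
    proof (rule seg_T2[OF _ _ _ cI y])
      show "?G differentiable_on cubeI" using CN_diff[OF cw, of "[i]"] N by simp
      show "partial cubeI j ?G differentiable_on cubeI" for j using CN_diff[OF cw, of "[j,i]"] N by simp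
      show "\<bar>partial cubeI k (partial cubeI j ?G) z\<bar> \<le> \<epsilon>" if "z \<in> cubeI" for j k z
        using bd[of "[k,j,i]" z] N that by simp
    qed
    have s1: "(\<Sum>j\<in>UNIV. ?v$j * partial cubeI j ?G c) = \<rho> * (\<Sum>j\<in>UNIV. (?M$i$j + ?M$j$i) * \<xi>$j) * (-1)"
    proof -
      have "?M$i$j + ?M$j$i = - ?H$j$i" for j using sym[of i j] by simp
      then show ?thesis by (simp add: Hij sum_distrib_left mult_ac sum_negf)
    qed
    have val: "P L ?\<Phi> \<xi> = (1/\<rho>) * (?G (c + ?v) - ?G c - (\<Sum>j\<in>UNIV. ?v$j * partial cubeI j ?G c))"
      using eq r pder_quad_1[OF \<xi>, of i "- w c / \<rho>\<^sup>2" "- (1/\<rho>) *\<^sub>R grad w c" ?M] unfolding 2 s1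
      by (simp add: grad_def field_simps power2_eq_square)
    have "\<bar>P L ?\<Phi> \<xi>\<bar> \<le> (1/\<rho>) * (?S^2 * \<epsilon> / 2)"
      unfolding val using T r by (intro scale_abs) auto
    also have "\<dots> \<le> (1/\<rho>) * ((\<rho> * ?n)^2 * \<epsilon> / 2)"
      using S S0 e0 r by (intro mult_left_mono divide_right_mono mult_right_mono power_mono) auto
    also have "\<dots> = ?n^2 / fact 2 * \<rho> * \<epsilon>" using r by (simp add: field_simps power2_eq_square)
    finally show ?thesis using 2 by (simp add: numeral_2_eq_2)
  next
    case (3 i j)
    let ?F = "partial cubeI i (partial cubeI j w)"
    have T: "\<bar>?F (c + ?v) - ?F c\<bar> \<le> ?S * \<epsilon>"
    proof (rule seg_T1[OF _ _ cI y])
      show "?F differentiable_on cubeI" using CN_diff[OF cw, of "[i,j]"] N by simp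
      show "\<bar>partial cubeI l ?F z\<bar> \<le> \<epsilon>" if "z \<in> cubeI" for l z
        using bd[of "[l,i,j]" z] N that by simp
    qed
    have val: "P L ?\<Phi> \<xi> = ?F (c + ?v) - ?F c"
    proof -
      have "?M$j$i + ?M$i$j = - ?F c" using sym[of i j] Hij[of i j] by simp
      then show ?thesis
        using eq r pder_quad_2[OF \<xi>, of i j "- w c / \<rho>\<^sup>2" "- (1/\<rho>) *\<^sub>R grad w c" ?M] unfolding 3
        by (simp add: field_simps power2_eq_square)
    qed
    have "\<bar>P L ?\<Phi> \<xi>\<bar> \<le> \<rho> * ?n * \<epsilon>"
      unfolding val using T S e0 by (meson mult_right_mono order_trans)
    then show ?thesis using 3 by (simp add: mult_ac)
  next
    case 4
    have val: "P L ?\<Phi> \<xi> = \<rho> ^ (length L - 2) * P L w (c + ?v)"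
    proof -
      have "(1/\<rho>\<^sup>2) * \<rho> ^ length L = \<rho> ^ (length L - 2)"
        using r 4 by (simp add: power_diff power2_eq_square field_simps)
      then show ?thesis using eq pder_quad_3[OF \<xi> 4] by simp
    qed
    have "\<bar>\<rho> ^ (length L - 2) * P L w (c + ?v)\<bar> \<le> \<rho> ^ (length L - 2) * \<epsilon>"
      using bd[OF L y] r by (simp add: abs_mult mult_left_mono)
    then show ?thesis using val 4 by simp
  qed
qed



lemma mv_add: "((A::real^'n^'m) + B) *v x = A *v x + B *v x"
  by (simp add: vec_eq_iff matrix_vector_mult_def sum.distrib algebra_simps)

lemma mv_scale: "((a::real) *\<^sub>R (A::real^'n^'m)) *v x = a *\<^sub>R (A *v x)"
  by (simp add: vec_eq_iff matrix_vector_mult_def sum_distrib_left mult_ac)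

lemma mv_neg: "(- (A::real^'n^'m)) *v x = - (A *v x)"
  by (simp add: vec_eq_iff matrix_vector_mult_def sum_negf)

theorem lemma2p4:
  fixes dummy :: "'n::finite itself"
  shows
  "(\<forall>N (\<epsilon>::real) (\<rho>::real) (\<psi>::real^'n \<Rightarrow> real).
      3 \<le> N \<longrightarrow> 0 < \<epsilon> \<longrightarrow> 0 < \<rho> \<longrightarrow> \<rho> \<le> 1/2 \<longrightarrow> Ell N \<epsilon> \<psi> \<longrightarrow>
      (\<forall>\<alpha>. mi_order \<alpha> \<le> N \<longrightarrow>
        (\<forall>\<xi>\<in>cubeI. \<forall>c\<in>half_cubeI.
           \<bar>pder cubeI \<alpha> (\<lambda>x. psi_cr \<psi> c \<rho> x - (hess \<psi> c *v x) \<bullet> x / 2) \<xi>\<bar>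
             \<le> (if mi_order \<alpha> \<le> 2
                 then real CARD('n) ^ (3 - mi_order \<alpha>) / fact (3 - mi_order \<alpha>) * \<rho> * \<epsilon>
                 else \<rho> ^ (mi_order \<alpha> - 2) * \<epsilon>))))
   \<and>
   (\<exists>C>0. \<forall>N (\<epsilon>::real) (\<rho>::real) (\<psi>::real^'n \<Rightarrow> real) c.
      2 \<le> N \<longrightarrow> 0 < \<epsilon> \<longrightarrow> 0 < \<rho> \<longrightarrow> \<rho> \<le> 1/2 \<longrightarrow> c \<in> half_cubeI \<longrightarrow>
      Ell N \<epsilon> \<psi> \<longrightarrow> Ell N (C * \<epsilon>) (psi_cr \<psi> c \<rho>))"
proof (intro conjI allI impI ballI)
  fix N :: nat and \<epsilon> \<rho> :: real and \<psi> :: "real^'n \<Rightarrow> real" and \<alpha> :: "'n \<Rightarrow> nat" and \<xi> c :: "real^'n"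
  assume N: "3 \<le> N" and e: "0 < \<epsilon>" and r: "0 < \<rho>" "\<rho> \<le> 1/2" and E: "Ell N \<epsilon> \<psi>"
    and \<alpha>: "mi_order \<alpha> \<le> N" and \<xi>: "\<xi> \<in> cubeI" and c: "c \<in> half_cubeI"
  define w where "w = (\<lambda>x. \<psi> x - (norm x)\<^sup>2 / 2)"
  have cn: "CN_on cubeI N \<psi>" using E by (simp add: Ell_def)
  have cw: "CN_on cubeI N w" unfolding w_def by (rule w_CN[OF cn])
  have bd: "\<And>L z. length L \<le> N \<Longrightarrow> z \<in> cubeI \<Longrightarrow> \<bar>P L w z\<bar> \<le> \<epsilon>"
    unfolding w_def by (rule w_bound[OF E])
  have cI: "c \<in> cubeI" using half_in_cubeI c by blast
  have g: "grad \<psi> c = grad w c + c" by (rule grad_rel[OF w_def cn _ cI]) (use N in simp)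
  have h: "hess \<psi> c = hess w c + mat 1" by (rule hess_rel[OF w_def cn _ cI]) (use N in simp)
  have feq: "(\<lambda>x. psi_cr \<psi> c \<rho> x - (hess \<psi> c *v x) \<bullet> x / 2)
      = (\<lambda>\<xi>. (1/\<rho>\<^sup>2) * w (\<rho> *\<^sub>R \<xi> + c) + quad (- w c / \<rho>\<^sup>2) (- (1/\<rho>) *\<^sub>R grad w c) (- (1/2) *\<^sub>R hess w c) \<xi>)"
    unfolding psi_cr_eq[OF w_def g r(1)] h
    by (rule ext) (simp add: quad_def mv_add mv_scale mv_neg mat_mult_vec inner_add_left algebra_simps)
  have len: "length (mi_list \<alpha>) = mi_order \<alpha>" by (simp add: mi_order_list)
  show "\<bar>pder cubeI \<alpha> (\<lambda>x. psi_cr \<psi> c \<rho> x - (hess \<psi> c *v x) \<bullet> x / 2) \<xi>\<bar>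
             \<le> (if mi_order \<alpha> \<le> 2
                 then real CARD('n) ^ (3 - mi_order \<alpha>) / fact (3 - mi_order \<alpha>) * \<rho> * \<epsilon>
                 else \<rho> ^ (mi_order \<alpha> - 2) * \<epsilon>)"
  proof -
    have PB: "\<bar>P (mi_list \<alpha>) (\<lambda>\<xi>. (1/\<rho>\<^sup>2) * w (\<rho> *\<^sub>R \<xi> + c) + quad (- w c / \<rho>\<^sup>2) (- (1/\<rho>) *\<^sub>R grad w c) (- (1/2) *\<^sub>R hess w c) \<xi>) \<xi>\<bar>
         \<le> (if length (mi_list \<alpha>) \<le> 2 then real CARD('n) ^ (3 - length (mi_list \<alpha>)) / fact (3 - length (mi_list \<alpha>)) * \<rho> * \<epsilon>
             else \<rho> ^ (length (mi_list \<alpha>) - 2) * \<epsilon>)"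
    proof (rule part1_bound[OF cw N _ r c \<xi>])
      show "length (mi_list \<alpha>) \<le> N" using len \<alpha> by simp
    qed (rule bd)
    then show ?thesis by (simp only: pder_def feq len)
  qed
next
  let ?C = "real CARD('n)^2 + real CARD('n) + 1"
  show "\<exists>C>0. \<forall>N (\<epsilon>::real) (\<rho>::real) (\<psi>::real^'n \<Rightarrow> real) c.
      2 \<le> N \<longrightarrow> 0 < \<epsilon> \<longrightarrow> 0 < \<rho> \<longrightarrow> \<rho> \<le> 1/2 \<longrightarrow> c \<in> half_cubeI \<longrightarrow>
      Ell N \<epsilon> \<psi> \<longrightarrow> Ell N (C * \<epsilon>) (psi_cr \<psi> c \<rho>)"
  proof (intro exI[of _ ?C] conjI allI impI)
    show "?C > 0" by (simp add: add_pos_nonneg)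
    fix N :: nat and \<epsilon> \<rho> :: real and \<psi> :: "real^'n \<Rightarrow> real" and c :: "real^'n"
    assume N: "2 \<le> N" and e: "0 < \<epsilon>" and r: "0 < \<rho>" "\<rho> \<le> 1/2" and c: "c \<in> half_cubeI"
      and E: "Ell N \<epsilon> \<psi>"
    define w where "w = (\<lambda>x. \<psi> x - (norm x)\<^sup>2 / 2)"
    have cn: "CN_on cubeI N \<psi>" using E by (simp add: Ell_def)
    have cw: "CN_on cubeI N w" unfolding w_def by (rule w_CN[OF cn])
    have bd: "\<And>L z. length L \<le> N \<Longrightarrow> z \<in> cubeI \<Longrightarrow> \<bar>P L w z\<bar> \<le> \<epsilon>"
      unfolding w_def by (rule w_bound[OF E])
    have cI: "c \<in> cubeI" using half_in_cubeI c by blast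
    have A: "\<forall>\<xi>\<in>cubeI. \<rho> *\<^sub>R \<xi> + c \<in> cubeI" using maps_half r c by blast
    have g: "grad \<psi> c = grad w c + c" by (rule grad_rel[OF w_def cn _ cI]) (use N in simp)
    have pe: "psi_cr \<psi> c \<rho> = (\<lambda>\<xi>. (1/\<rho>\<^sup>2) * w (\<rho> *\<^sub>R \<xi> + c)
            + quad (- w c / \<rho>\<^sup>2) (- (1/\<rho>) *\<^sub>R grad w c) (mat (1/2)) \<xi>)"
      by (rule psi_cr_eq[OF w_def g r(1)])
    have feq: "(\<lambda>x. psi_cr \<psi> c \<rho> x - (norm x)\<^sup>2 / 2)
      = (\<lambda>\<xi>. (1/\<rho>\<^sup>2) * w (\<rho> *\<^sub>R \<xi> + c) + quad (- w c / \<rho>\<^sup>2) (- (1/\<rho>) *\<^sub>R grad w c) 0 \<xi>)"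
      unfolding pe by (rule ext) (simp add: quad_def mat_mult_vec power2_norm_eq_inner)
    have "CN_on cubeI N (psi_cr \<psi> c \<rho>)" unfolding pe by (rule CN_on_combo[OF cw A])
    moreover have "psi_cr \<psi> c \<rho> 0 = 0" by (simp add: psi_cr_def)
    moreover have "grad (psi_cr \<psi> c \<rho>) 0 = 0"
    proof -
      have "partial cubeI i (psi_cr \<psi> c \<rho>) 0 = 0" for i
      proof -
        have z: "(0::real^'n) \<in> cubeI" by (simp add: cubeI_iff)
        have sm: "smooth (length [i]) w" using CN_smooth[OF cw, of "[i]"] N by simp
        have "P [i] (psi_cr \<psi> c \<rho>) 0 = (1/\<rho>\<^sup>2) * \<rho> ^ length [i] * P [i] w (\<rho> *\<^sub>R 0 + c)
           + P [i] (quad (- w c / \<rho>\<^sup>2) (- (1/\<rho>) *\<^sub>R grad w c) (mat (1/2))) 0"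
          unfolding pe by (rule combo[OF sm A z])
        also have "\<dots> = 0"
          using pder_quad_1[OF z, of i "- w c / \<rho>\<^sup>2" "- (1/\<rho>) *\<^sub>R grad w c" "mat (1/2)"] r
          by (simp add: grad_def power2_eq_square)
        finally show ?thesis by simp
      qed
      then show ?thesis by (simp add: grad_def vec_eq_iff)
    qed
    moreover have "\<forall>\<alpha>. mi_order \<alpha> \<le> N \<longrightarrow>
        (\<forall>\<xi>\<in>cubeI. \<bar>pder cubeI \<alpha> (\<lambda>x. psi_cr \<psi> c \<rho> x - (norm x)\<^sup>2 / 2) \<xi>\<bar> \<le> ?C * \<epsilon>)"
    proof (intro allI impI ballI)
      fix \<alpha> :: "'n \<Rightarrow> nat" and \<xi> :: "real^'n"
      assume \<alpha>: "mi_order \<alpha> \<le> N" and \<xi>: "\<xi> \<in> cubeI"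
      have len: "length (mi_list \<alpha>) \<le> N" using \<alpha> by (simp add: mi_order_list)
      show "\<bar>pder cubeI \<alpha> (\<lambda>x. psi_cr \<psi> c \<rho> x - (norm x)\<^sup>2 / 2) \<xi>\<bar> \<le> ?C * \<epsilon>"
        unfolding pder_def feq by (rule part2_bound[OF cw N _ r c \<xi> len]) (rule bd)
    qed
    ultimately show "Ell N (?C * \<epsilon>) (psi_cr \<psi> c \<rho>)" unfolding Ell_def by blast
  qed
qed

end
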